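(* (Extended$^{6\text{-th}}$ P-B-W Theorem.) Let $(\mathcal L,[\,,\,])$ be a Lie algebra over a field $\mathbf{k}$ with basis $X=\{x_j\mid j\in J\}$ where $J$ is ordered, let $k\in\mathbf{k}$ be nonzero, and let $\hat A,\hat q,\hat x_j,R$ be as in the context, so that $\mathcal U=\hat A/R$ with $\bar q=\hat q+R$ is the enveloping$^{6\text{-th}}$ algebra of $\mathcal L$. Then the set of cosets consisting of $$\hat q\hat x_{j_1}\cdots\hat x_{j_m}+R,\qquad \hat x_{i_1}\cdots\hat x_{i_t}\hat x_{j_0}\hat q\hat x_{j_1}\cdots\hat x_{j_m}+R,\qquad \hat x_{j_1}\cdots\hat x_{j_m}+R,$$ where $x_{i_1},\dots,x_{i_t},x_{j_0},x_{j_1},\dots,x_{j_m}\in X$, $i_t\ge\cdots\ge i_1$, $j_m\ge\cdots\ge j_1\ge j_0$, and $t,m\in\mathbb Z_{\ge0}$, is a basis of $\mathcal U$.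
   Context: Let $\tilde q\notin X$, $V$ the vector space with basis $X\cup\{\tilde q\}$, $T(V)$ its tensor algebra, $I$ the ideal of $T(V)$ generated by $\tilde q\otimes\tilde q-\tilde q$ and $\tilde q\otimes a\otimes\tilde q-\tilde q\otimes a$ for $a\in T(V)$; $\hat A:=T(V)/I$, $\hat q:=\tilde q+I$, $\hat x_j:=x_j+I$, and $x\mapsto\hat x$ the linear extension $\mathcal L\to\hat A$ (injective). $R$ is the two-sided ideal of $\hat A$ generated by $\widehat{[x,y]}-\hat x\hat y+\hat y\hat x+\hat x\hat y\hat q-\hat y\hat x\hat q-k\hat x\hat q\hat y+k\hat y\hat q\hat x$ for $x,y\in\mathcal L$. (This $\hat A/R$, with $\bar q$ and $i(x)=\hat x+R$, is the universal object for Lie homomorphisms into invariant algebras $(A,q)=\{a\in A\mid qaq=qa\}$ equipped with the bracket $[a,b]_{6,k}=ab-ba-abq+baq+kaqb-kbqa$.) *)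

theory Defs
  imports "HOL-Library.Poly_Mapping"
begin

text \<open>The Lie algebra L with basis X = {x_j | j in J} is modelled as the free
  vector space on J, i.e. finitely supported functions J -> k.
  Letters of the alphabet X \<union> {q~}: Some j is x_j, None is q~.
  The tensor algebra T(V) is the free associative algebra on these letters:
  finitely supported functions from words to k.\<close>

type_synonym ('j,'k) lie = "'j \<Rightarrow>\<^sub>0 'k"
type_synonym ('j,'k) tens = "'j option list \<Rightarrow>\<^sub>0 'k"

definition lsmult :: "'k::field \<Rightarrow> ('j,'k) lie \<Rightarrow> ('j,'k) lie" where
  "lsmult c x = Poly_Mapping.map (\<lambda>a. c * a) x"

definition is_lie_bracket :: "(('j,'k::field) lie \<Rightarrow> ('j,'k) lie \<Rightarrow> ('j,'k) lie) \<Rightarrow> bool" where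
  "is_lie_bracket br \<longleftrightarrow>
     (\<forall>x y z. br (x + y) z = br x z + br y z) \<and>
     (\<forall>x y z. br x (y + z) = br x y + br x z) \<and>
     (\<forall>c x y. br (lsmult c x) y = lsmult c (br x y)) \<and>
     (\<forall>c x y. br x (lsmult c y) = lsmult c (br x y)) \<and>
     (\<forall>x. br x x = 0) \<and>
     (\<forall>x y z. br x (br y z) + br y (br z x) + br z (br x y) = 0)"

definition tmult :: "('j,'k::field) tens \<Rightarrow> ('j,'k) tens \<Rightarrow> ('j,'k) tens" (infixl "\<star>" 70) where
  "f \<star> g = (\<Sum>u\<in>Poly_Mapping.keys f. \<Sum>v\<in>Poly_Mapping.keys g. Poly_Mapping.single (u @ v) (Poly_Mapping.lookup f u * Poly_Mapping.lookup g v))"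

definition tsmult :: "'k::field \<Rightarrow> ('j,'k) tens \<Rightarrow> ('j,'k) tens" where
  "tsmult c f = Poly_Mapping.map (\<lambda>a. c * a) f"

definition wd :: "'j option list \<Rightarrow> ('j,'k::field) tens" where
  "wd w = Poly_Mapping.single w 1"

definition qt :: "('j,'k::field) tens" where
  "qt = wd [None]"

definition emb :: "('j,'k::field) lie \<Rightarrow> ('j,'k) tens" where
  "emb x = (\<Sum>j\<in>Poly_Mapping.keys x. Poly_Mapping.single [Some j] (Poly_Mapping.lookup x j))"

inductive_set ideal_gen :: "('j,'k::field) tens set \<Rightarrow> ('j,'k) tens set" for G where
  zero: "0 \<in> ideal_gen G"
| gen: "g \<in> G \<Longrightarrow> (a \<star> g) \<star> b \<in> ideal_gen G"
| add: "f \<in> ideal_gen G \<Longrightarrow> h \<in> ideal_gen G \<Longrightarrow> f + h \<in> ideal_gen G"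

text \<open>Generators of the ideal I of T(V) (so that A-hat = T(V)/I).\<close>
definition gens_I :: "('j,'k::field) tens set" where
  "gens_I = {qt \<star> qt - qt} \<union> {qt \<star> a \<star> qt - qt \<star> a | a. True}"

text \<open>Lifts to T(V) of the generators of R (with parameter k).\<close>
definition gens_R :: "(('j,'k::field) lie \<Rightarrow> ('j,'k) lie \<Rightarrow> ('j,'k) lie) \<Rightarrow> 'k \<Rightarrow> ('j,'k) tens set" where
  "gens_R br k = {emb (br x y) - emb x \<star> emb y + emb y \<star> emb x
                  + emb x \<star> emb y \<star> qt - emb y \<star> emb x \<star> qt
                  - tsmult k (emb x \<star> qt \<star> emb y) + tsmult k (emb y \<star> qt \<star> emb x) | x y. True}"

text \<open>Preimage in T(V) of R under T(V) -> A-hat; then U = A-hat/R = T(V)/(this ideal).\<close>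
definition ideal_U :: "(('j,'k::field) lie \<Rightarrow> ('j,'k) lie \<Rightarrow> ('j,'k) lie) \<Rightarrow> 'k \<Rightarrow> ('j,'k) tens set" where
  "ideal_U br k = ideal_gen (gens_I \<union> gens_R br k)"

definition pbw_words :: "'j::linorder option list set" where
  "pbw_words =
     {None # map Some js | js. sorted js}
   \<union> {map Some is @ [Some j0, None] @ map Some js | is j0 js. sorted is \<and> sorted (j0 # js)}
   \<union> {map Some js | js. sorted js}"

text \<open>The cosets w + N (w in W) form a basis of T(V)/N: spanning and linearly independent
  (independence of the family indexed by distinct words also gives injectivity w \<mapsto> coset).\<close>
definition cosets_basis :: "('j,'k::field) tens set \<Rightarrow> 'j option list set \<Rightarrow> bool" where
  "cosets_basis N W \<longleftrightarrow>
     (\<forall>f. \<exists>S c. finite S \<and> S \<subseteq> W \<and> f - (\<Sum>w\<in>S. tsmult (c w) (wd w)) \<in> N) \<and>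
     (\<forall>S c. finite S \<and> S \<subseteq> W \<and> (\<Sum>w\<in>S. tsmult (c w) (wd w)) \<in> N \<longrightarrow> (\<forall>w\<in>S. c w = 0))"

end

theory Submission
  imports Defs "HOL-Library.Multiset" "HOL-Library.Product_Plus"
begin


abbreviation lk where "lk \<equiv> Poly_Mapping.lookup"
abbreviation ks where "ks \<equiv> Poly_Mapping.keys"
abbreviation sg where "sg \<equiv> Poly_Mapping.single"

definition sm :: "'k::field \<Rightarrow> ('a \<Rightarrow>\<^sub>0 'k) \<Rightarrow> ('a \<Rightarrow>\<^sub>0 'k)" where
  "sm c f = Poly_Mapping.map (\<lambda>a. c * a) f"

lemma lookup_sm[simp]: "lk (sm c f) x = c * lk f x"
  unfolding sm_def by transfer (simp add: when_def)

lemma sm_add: "sm c (f + g) = sm c f + sm c g"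
  by (rule poly_mapping_eqI) (simp add: lookup_add algebra_simps)
lemma sm_add_left: "sm (c + d) f = sm c f + sm d f"
  by (rule poly_mapping_eqI) (simp add: lookup_add algebra_simps)
lemma sm_sm[simp]: "sm c (sm d f) = sm (c * d) f"
  by (rule poly_mapping_eqI) (simp add: algebra_simps)
lemma sm_one[simp]: "sm 1 f = f"
  by (rule poly_mapping_eqI) simp
lemma sm_zero_left[simp]: "sm 0 f = 0"
  by (rule poly_mapping_eqI) simp
lemma sm_zero[simp]: "sm c 0 = 0"
  by (rule poly_mapping_eqI) simp
lemma sm_minus: "sm c (- f) = - sm c f"
  by (rule poly_mapping_eqI) simp
lemma sm_diff: "sm c (f - g) = sm c f - sm c g"
  by (rule poly_mapping_eqI) (simp add: lookup_minus algebra_simps)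
lemma sm_diff_left: "sm (c - d) f = sm c f - sm d f"
  by (rule poly_mapping_eqI) (simp add: lookup_minus algebra_simps)
lemma sm_neg_left: "sm (- c) f = - sm c f"
  by (rule poly_mapping_eqI) simp
lemma sm_sum: "sm c (sum g A) = (\<Sum>i\<in>A. sm c (g i))"
  by (induction A rule: infinite_finite_induct) (auto simp: sm_add)
lemma sm_single[simp]: "sm c (sg x d) = sg x (c * d)"
  by (rule poly_mapping_eqI) (simp add: lookup_single when_def)
lemma sm_minus_one: "sm (-1) f = - f"
  by (rule poly_mapping_eqI) simp
lemma keys_sm: "ks (sm c f) \<subseteq> ks f"
  by (auto simp: in_keys_iff)
lemma keys_sm_nz: "c \<noteq> 0 \<Longrightarrow> ks (sm c f) = ks f"
  by (auto simp: in_keys_iff)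

lemma lsmult_sm: "lsmult = sm"
  by (intro ext) (simp add: lsmult_def sm_def)
lemma tsmult_sm: "tsmult = sm"
  by (intro ext) (simp add: tsmult_def sm_def)

definition lx :: "('a \<Rightarrow> 'b \<Rightarrow>\<^sub>0 'k::field) \<Rightarrow> ('a \<Rightarrow>\<^sub>0 'k) \<Rightarrow> 'b \<Rightarrow>\<^sub>0 'k" where
  "lx g x = (\<Sum>i\<in>ks x. sm (lk x i) (g i))"

lemma ext_cong[fundef_cong]: "x = y \<Longrightarrow> (\<And>i. i \<in> ks y \<Longrightarrow> g i = h i) \<Longrightarrow> lx g x = lx h y"
  by (simp add: lx_def)

lemma ext_superset: "finite A \<Longrightarrow> ks x \<subseteq> A \<Longrightarrow> lx g x = (\<Sum>i\<in>A. sm (lk x i) (g i))"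
  unfolding lx_def by (rule sum.mono_neutral_left) (auto simp: in_keys_iff)

lemma ext_0[simp]: "lx g 0 = 0"
  by (simp add: lx_def)

lemma ext_add: "lx g (x + y) = lx g x + lx g y"
proof -
  let ?A = "ks x \<union> ks y"
  have "lx g (x + y) = (\<Sum>i\<in>?A. sm (lk (x+y) i) (g i))"
    by (rule ext_superset) (auto simp: keys_add)
  also have "\<dots> = (\<Sum>i\<in>?A. sm (lk x i) (g i)) + (\<Sum>i\<in>?A. sm (lk y i) (g i))"
    by (simp add: lookup_add sm_add_left sum.distrib)
  also have "\<dots> = lx g x + lx g y"
    by (simp add: ext_superset[of "ks x \<union> ks y" x] ext_superset[of "ks x \<union> ks y" y])
  finally show ?thesis .
qed

lemma ext_sm: "lx g (sm c x) = sm c (lx g x)"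
  by (subst ext_superset[OF finite_keys keys_sm]) (simp add: lx_def sm_sum)

lemma ext_minus: "lx g (- x) = - lx g x"
  using ext_sm[of g "-1" x] by (simp add: sm_minus_one)

lemma ext_diff: "lx g (x - y) = lx g x - lx g y"
  using ext_add[of g x "- y"] ext_minus[of g y] by simp

lemma ext_single[simp]: "lx g (sg i c) = sm c (g i)"
  by (cases "c = 0") (simp_all add: lx_def)

lemma ext_sum: "lx g (sum f A) = (\<Sum>a\<in>A. lx g (f a))"
  by (induction A rule: infinite_finite_induct) (auto simp: ext_add)

lemma ext_fun_add: "lx (\<lambda>i. g i + h i) x = lx g x + lx h x"
  by (simp add: lx_def sm_add sum.distrib)
lemma ext_fun_sm: "lx (\<lambda>i. sm c (g i)) x = sm c (lx g x)"
  by (simp add: lx_def sm_sum mult.commute)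
lemma ext_fun_zero[simp]: "lx (\<lambda>i. 0) x = 0"
  by (simp add: lx_def)
lemma ext_fun_sum: "lx (\<lambda>i. \<Sum>j\<in>A. f j i) x = (\<Sum>j\<in>A. lx (f j) x)"
  by (induction A rule: infinite_finite_induct) (auto simp: ext_fun_add)
lemma ext_fun_minus: "lx (\<lambda>i. - g i) x = - lx g x"
  by (simp add: lx_def sm_minus sum_negf)
lemma ext_fun_diff: "lx (\<lambda>i. g i - h i) x = lx g x - lx h x"
  by (simp add: lx_def sm_diff sum_subtractf)

lemma ext_eq_zero: "(\<And>i. i \<in> ks x \<Longrightarrow> g i = 0) \<Longrightarrow> lx g x = 0"
  by (simp add: lx_def)

lemma keys_ext: "ks (lx g x) \<subseteq> (\<Union>i\<in>ks x. ks (g i))"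
  unfolding lx_def using keys_sum keys_sm by fastforce

lemma expansion: "lx (\<lambda>i. sg i 1) x = x"
proof -
  have *: "finite I \<Longrightarrow> lk (\<Sum>i\<in>I. sm (lk x i) (sg i 1)) j =
            (if j \<in> I then lk x j else 0)" for I j
    by (induction I rule: finite_induct) (auto simp: lookup_single lookup_add when_def)
  show ?thesis unfolding lx_def
  proof (rule poly_mapping_eqI)
    fix j
    have "lk (\<Sum>i\<in>ks x. sm (lk x i) (sg i 1)) j = (if j \<in> ks x then lk x j else 0)"
      by (rule *) simp
    then show "lk (\<Sum>i\<in>ks x. sm (lk x i) (sg i 1)) j = lk x j"
      by (simp add: in_keys_iff split: if_splits)
  qed
qed

definition lin :: "(('a \<Rightarrow>\<^sub>0 'k::field) \<Rightarrow> ('b \<Rightarrow>\<^sub>0 'k)) \<Rightarrow> bool" where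
  "lin F \<longleftrightarrow> (\<forall>x y. F (x + y) = F x + F y) \<and> (\<forall>c x. F (sm c x) = sm c (F x))"

lemma lin_ext: "lin (lx g)"
  by (simp add: lin_def ext_add ext_sm)

lemma lin_add: "lin F \<Longrightarrow> F (x + y) = F x + F y" by (simp add: lin_def)
lemma lin_sm: "lin F \<Longrightarrow> F (sm c x) = sm c (F x)" by (simp add: lin_def)
lemma lin_zero: "lin F \<Longrightarrow> F 0 = 0"
  using lin_sm[of F 0 0] by simp
lemma lin_minus: "lin F \<Longrightarrow> F (- x) = - F x"
  using lin_sm[of F "-1" x] by (simp add: sm_minus_one)
lemma lin_diff: "lin F \<Longrightarrow> F (x - y) = F x - F y"
  using lin_add[of F x "- y"] lin_minus[of F y] by simp
lemma lin_sum: "lin F \<Longrightarrow> F (sum g A) = (\<Sum>a\<in>A. F (g a))"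
  by (induction A rule: infinite_finite_induct) (auto simp: lin_add lin_zero)

lemma lin_comp_ext: "lin F \<Longrightarrow> F (lx g x) = lx (\<lambda>i. F (g i)) x"
  by (simp add: lx_def lin_sum lin_sm)

lemma lin_unique: "lin F \<Longrightarrow> F x = lx (\<lambda>i. F (sg i 1)) x"
  using lin_comp_ext[of F "\<lambda>i. sg i 1" x] expansion[of x] by simp

lemma lin_eqI: "lin F \<Longrightarrow> lin G \<Longrightarrow> (\<And>i. i \<in> ks x \<Longrightarrow> F (sg i 1) = G (sg i 1)) \<Longrightarrow> F x = G x"
proof -
  assume a: "lin F" "lin G" "\<And>i. i \<in> ks x \<Longrightarrow> F (sg i 1) = G (sg i 1)"
  have "F x = lx (\<lambda>i. F (sg i 1)) x" by (rule lin_unique[OF a(1)])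
  also have "\<dots> = lx (\<lambda>i. G (sg i 1)) x" by (rule ext_cong) (use a(3) in auto)
  also have "\<dots> = G x" by (rule lin_unique[OF a(2), symmetric])
  finally show ?thesis .
qed

lemma lin_comp: "lin F \<Longrightarrow> lin G \<Longrightarrow> lin (\<lambda>x. F (G x))"
  by (simp add: lin_def)

lemma ext_ext: "lx f (lx g x) = lx (\<lambda>i. lx f (g i)) x"
  by (rule lin_comp_ext[OF lin_ext])

lemma ext_single_fun: "lx (\<lambda>i. sg (h i) 1) (sg i c) = sg (h i) c"
  by simp

lemma lookup_ext: "lk (lx g x) y = (\<Sum>i\<in>ks x. lk x i * lk (g i) y)"
  by (simp add: lx_def lookup_sum)


lemma lx_swap: "lx (\<lambda>u. lx (\<lambda>v. h u v) g) f = lx (\<lambda>v. lx (\<lambda>u. h u v) f) g"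
  by (simp add: lx_def sm_sum sum_distrib_left mult.commute sum.swap[of _ "ks f"])

lemma tmult_lx: "f \<star> g = lx (\<lambda>u. lx (\<lambda>v. wd (u @ v)) g) f"
  by (simp add: tmult_def lx_def sm_sum wd_def mult.commute)

lemma tmult_lx2: "f \<star> g = lx (\<lambda>v. lx (\<lambda>u. wd (u @ v)) f) g"
  unfolding tmult_lx by (rule lx_swap)

lemma lin_tmult_left: "lin (\<lambda>f. f \<star> g)"
  unfolding tmult_lx by (rule lin_ext)
lemma lin_tmult_right: "lin (\<lambda>g. f \<star> g)"
  unfolding tmult_lx2 by (rule lin_ext)

lemma tmult_add_left: "(f + h) \<star> g = f \<star> g + h \<star> g"
  using lin_add[OF lin_tmult_left] .
lemma tmult_add_right: "g \<star> (f + h) = g \<star> f + g \<star> h"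
  using lin_add[OF lin_tmult_right] .
lemma tmult_sm_left: "(sm c f) \<star> g = sm c (f \<star> g)"
  using lin_sm[OF lin_tmult_left] .
lemma tmult_sm_right: "g \<star> (sm c f) = sm c (g \<star> f)"
  using lin_sm[OF lin_tmult_right] .
lemma tmult_diff_left: "(f - h) \<star> g = f \<star> g - h \<star> g"
  using lin_diff[OF lin_tmult_left] .
lemma tmult_diff_right: "g \<star> (f - h) = g \<star> f - g \<star> h"
  using lin_diff[OF lin_tmult_right] .
lemma tmult_0_left[simp]: "0 \<star> g = 0"
  using lin_zero[OF lin_tmult_left] .
lemma tmult_0_right[simp]: "g \<star> 0 = 0"
  using lin_zero[OF lin_tmult_right] .

lemma wd_mult[simp]: "wd u \<star> wd v = wd (u @ v)"
  by (simp add: tmult_lx wd_def)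

lemma tmult_assoc: "(f \<star> g) \<star> h = f \<star> (g \<star> h)"
  by (simp add: tmult_lx ext_ext wd_def)

lemma wd_Nil_left[simp]: "wd [] \<star> f = f"
  by (simp add: tmult_lx2 wd_def expansion)
lemma wd_Nil_right[simp]: "f \<star> wd [] = f"
  by (simp add: tmult_lx wd_def expansion)

lemma emb_lx: "emb x = lx (\<lambda>j. wd [Some j]) x"
  by (simp add: emb_def lx_def wd_def)

lemma wd_lx: "f = lx wd f"
  unfolding wd_def[abs_def] by (rule expansion[symmetric])

lemma ideal_sm: "f \<in> ideal_gen G \<Longrightarrow> sm c f \<in> ideal_gen G"
proof (induction rule: ideal_gen.induct)
  case zero then show ?case by (simp add: ideal_gen.zero)
next
  case (gen g a b) then show ?case
    using ideal_gen.gen[of g G "sm c a" b] by (simp add: tmult_sm_left)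
next
  case (add f h) then show ?case by (simp add: sm_add ideal_gen.add)
qed

lemma ideal_neg: "f \<in> ideal_gen G \<Longrightarrow> - f \<in> ideal_gen G"
  using ideal_sm[of f G "-1"] by (simp add: sm_minus_one)
lemma ideal_diff: "f \<in> ideal_gen G \<Longrightarrow> h \<in> ideal_gen G \<Longrightarrow> f - h \<in> ideal_gen G"
  using ideal_gen.add[OF _ ideal_neg, of f G h] by simp
lemma ideal_add: "f \<in> ideal_gen G \<Longrightarrow> h \<in> ideal_gen G \<Longrightarrow> f + h \<in> ideal_gen G"
  by (rule ideal_gen.add)

lemma ideal_mult_left: "f \<in> ideal_gen G \<Longrightarrow> p \<star> f \<in> ideal_gen G"
proof (induction rule: ideal_gen.induct)
  case zero then show ?case by (simp add: ideal_gen.zero)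
next
  case (gen g a b) then show ?case
    using ideal_gen.gen[of g G "p \<star> a" b] by (simp add: tmult_assoc)
next
  case (add f h) then show ?case by (simp add: tmult_add_right ideal_gen.add)
qed

lemma ideal_mult_right: "f \<in> ideal_gen G \<Longrightarrow> f \<star> p \<in> ideal_gen G"
proof (induction rule: ideal_gen.induct)
  case zero then show ?case by (simp add: ideal_gen.zero)
next
  case (gen g a b) then show ?case
    using ideal_gen.gen[of g G a "b \<star> p"] by (simp add: tmult_assoc)
next
  case (add f h) then show ?case by (simp add: tmult_add_left ideal_gen.add)
qed

lemma ideal_gen_in: "g \<in> G \<Longrightarrow> g \<in> ideal_gen G"
  using ideal_gen.gen[of g G "wd []" "wd []"] by simp

lemma ideal_sum: "(\<And>i. i \<in> A \<Longrightarrow> f i \<in> ideal_gen G) \<Longrightarrow> sum f A \<in> ideal_gen G"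
  by (induction A rule: infinite_finite_induct) (auto simp: ideal_gen.zero ideal_add)


abbreviation z :: "'a \<Rightarrow> 'a \<Rightarrow>\<^sub>0 'k::field" where "z s \<equiv> sg s 1"

definition Bk :: "(('j,'k::field) lie \<Rightarrow> ('j,'k) lie \<Rightarrow> ('j,'k) lie) \<Rightarrow> 'j \<Rightarrow> 'j \<Rightarrow> ('j,'k) lie" where
  "Bk br l m = br (z l) (z m)"

definition trunc :: "nat \<Rightarrow> ('j multiset \<Rightarrow>\<^sub>0 'k::field) \<Rightarrow> ('j multiset \<Rightarrow>\<^sub>0 'k)" where
  "trunc n y = lx (\<lambda>s. if size s \<le> n then z s else 0) y"

primrec RR :: "(('j::linorder,'k::field) lie \<Rightarrow> ('j,'k) lie \<Rightarrow> ('j,'k) lie) \<Rightarrow> nat \<Rightarrow> 'j \<Rightarrow> 'j multiset \<Rightarrow> ('j multiset \<Rightarrow>\<^sub>0 'k)" where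
  "RR br 0 l s = z (add_mset l s)"
| "RR br (Suc n) l s = (if s = {#} \<or> l \<le> Min (set_mset s) then z (add_mset l s) else
     z (add_mset l s)
     + lx (RR br n (Min (set_mset s))) (trunc (size s - 1) (RR br n l (s - {#Min (set_mset s)#}) - z (add_mset l (s - {#Min (set_mset s)#}))))
     + (\<Sum>\<nu>\<in>ks (Bk br l (Min (set_mset s))). sm (lk (Bk br l (Min (set_mset s))) \<nu>) (RR br n \<nu> (s - {#Min (set_mset s)#}))))"

definition rho where "rho br l s = RR br (size s) l s"

lemma keys_trunc: "ks (trunc n y) \<subseteq> {s. size s \<le> n}"
  unfolding trunc_def by (rule subset_trans[OF keys_ext]) (auto split: if_splits)

lemma trunc_id: "(\<And>s. s \<in> ks y \<Longrightarrow> size s \<le> n) \<Longrightarrow> trunc n y = y"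
proof -
  assume a: "\<And>s. s \<in> ks y \<Longrightarrow> size s \<le> n"
  have "trunc n y = lx (\<lambda>s. z s) y" unfolding trunc_def by (rule ext_cong) (use a in auto)
  then show ?thesis by (simp add: expansion)
qed

lemma size_Min_minus:
  assumes "s \<noteq> {#}" shows "size (s - {#Min (set_mset s)#}) = size s - 1"
  using assms by (simp add: size_Diff_submset)

lemma size_Min_Suc: "s \<noteq> {#} \<Longrightarrow> size s = Suc (size (s - {#Min (set_mset s)#}))"
  using size_Min_minus[of s] by (cases s) auto

lemma RR_Suc_eq: "size s \<le> n \<Longrightarrow> RR br (Suc n) l s = RR br n l s"
proof (induction n arbitrary: l s)
  case 0
  then show ?case by simp
next
  case (Suc n)
  show ?case
  proof (cases "s = {#} \<or> l \<le> Min (set_mset s)")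
    case True then show ?thesis by simp
  next
    case False
    let ?m = "Min (set_mset s)" let ?t = "s - {#?m#}"
    have st: "size ?t \<le> n" using False Suc.prems size_Min_minus[of s] by auto
    have 1: "RR br (Suc n) l ?t = RR br n l ?t" using Suc.IH st by blast
    have 2: "lx (RR br (Suc n) ?m) (trunc (size s - 1) (RR br n l ?t - z (add_mset l ?t)))
      = lx (RR br n ?m) (trunc (size s - 1) (RR br n l ?t - z (add_mset l ?t)))"
    proof (rule ext_cong[OF refl])
      fix w assume "w \<in> ks (trunc (size s - 1) (RR br n l ?t - z (add_mset l ?t)))"
      then have "size w \<le> size s - 1" using keys_trunc by blast
      then have "size w \<le> n" using Suc.prems by simp
      then show "RR br (Suc n) ?m w = RR br n ?m w" using Suc.IH by blast
    qed
    have 3: "(\<Sum>\<nu>\<in>ks (Bk br l ?m). sm (lk (Bk br l ?m) \<nu>) (RR br (Suc n) \<nu> ?t))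
       = (\<Sum>\<nu>\<in>ks (Bk br l ?m). sm (lk (Bk br l ?m) \<nu>) (RR br n \<nu> ?t))"
      using Suc.IH st by simp
    show ?thesis using False 1 2 3 by (simp only: RR.simps if_False Let_def) 
  qed
qed

lemma RR_stable: "size s \<le> n \<Longrightarrow> RR br n l s = rho br l s"
proof (induction n rule: dec_induct)
  case base then show ?case by (simp add: rho_def)
next
  case (step n) then show ?case using RR_Suc_eq[of s n br l] by (simp del: RR.simps)
qed

lemma rho_eq: "rho br l s = (if s = {#} \<or> l \<le> Min (set_mset s) then z (add_mset l s) else
     z (add_mset l s)
     + lx (rho br (Min (set_mset s))) (trunc (size s - 1) (rho br l (s - {#Min (set_mset s)#}) - z (add_mset l (s - {#Min (set_mset s)#}))))
     + (\<Sum>\<nu>\<in>ks (Bk br l (Min (set_mset s))). sm (lk (Bk br l (Min (set_mset s))) \<nu>) (rho br \<nu> (s - {#Min (set_mset s)#}))))"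
proof (cases "s = {#} \<or> l \<le> Min (set_mset s)")
  case True then show ?thesis by (cases s) (auto simp: rho_def)
next
  case False
  let ?m = "Min (set_mset s)" let ?t = "s - {#?m#}"
  have ss: "size s = Suc (size ?t)" using False size_Min_Suc[of s] by auto
  have 1: "RR br (size ?t) l ?t = rho br l ?t" by (simp add: rho_def)
  have 2: "lx (RR br (size ?t) ?m) (trunc (size s - 1) (rho br l ?t - z (add_mset l ?t)))
      = lx (rho br ?m) (trunc (size s - 1) (rho br l ?t - z (add_mset l ?t)))"
  proof (rule ext_cong[OF refl])
    fix w assume "w \<in> ks (trunc (size s - 1) (rho br l ?t - z (add_mset l ?t)))"
    then have "size w \<le> size s - 1" using keys_trunc by blast
    then show "RR br (size ?t) ?m w = rho br ?m w" using RR_stable ss by simp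
  qed
  have 3: "(\<Sum>\<nu>\<in>ks (Bk br l ?m). sm (lk (Bk br l ?m) \<nu>) (RR br (size ?t) \<nu> ?t))
       = (\<Sum>\<nu>\<in>ks (Bk br l ?m). sm (lk (Bk br l ?m) \<nu>) (rho br \<nu> ?t))"
    by (simp add: rho_def)
  have "rho br l s = RR br (Suc (size ?t)) l s" by (simp add: rho_def ss)
  also have "\<dots> = z (add_mset l s)
     + lx (RR br (size ?t) ?m) (trunc (size s - 1) (rho br l ?t - z (add_mset l ?t)))
     + (\<Sum>\<nu>\<in>ks (Bk br l ?m). sm (lk (Bk br l ?m) \<nu>) (RR br (size ?t) \<nu> ?t))"
    using False 1 by (simp only: RR.simps if_False)
  finally show ?thesis using False 2 3 by simp
qed

lemma rho_simple: "s = {#} \<or> l \<le> Min (set_mset s) \<Longrightarrow> rho br l s = z (add_mset l s)"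
  by (subst rho_eq) simp

lemma keys_sum_sub: "(\<And>i. i \<in> A \<Longrightarrow> ks (f i) \<subseteq> S) \<Longrightarrow> ks (sum f A) \<subseteq> S"
  using keys_sum by fastforce

lemma keys_ext_sub: "(\<And>i. i \<in> ks x \<Longrightarrow> ks (g i) \<subseteq> S) \<Longrightarrow> ks (lx g x) \<subseteq> S"
  using keys_ext by fastforce

lemma keys_add_sub: "ks f \<subseteq> S \<Longrightarrow> ks g \<subseteq> S \<Longrightarrow> ks (f + g) \<subseteq> S"
  using keys_add[of f g] by blast

lemma keys_diff_sub: "ks f \<subseteq> S \<Longrightarrow> ks g \<subseteq> S \<Longrightarrow> ks (f - g) \<subseteq> S"
  using keys_diff[of f g] by blast

lemma keys_sm_sub: "ks f \<subseteq> S \<Longrightarrow> ks (sm c f) \<subseteq> S"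
  using keys_sm[of c f] by blast

lemma rho_keys:
  fixes br :: "('j::linorder,'k::field) lie \<Rightarrow> ('j,'k) lie \<Rightarrow> ('j,'k) lie"
  shows "ks (rho br l s - z (add_mset l s)) \<subseteq> {w. size w \<le> size s}"
proof (induction "size s" arbitrary: l s rule: less_induct)
  case less
  show ?case
  proof (cases "s = {#} \<or> l \<le> Min (set_mset s)")
    case True then show ?thesis by (simp add: rho_simple)
  next
    case False
    let ?m = "Min (set_mset s)" let ?t = "s - {#?m#}"
    have ss2: "size s = Suc (size ?t)" using False size_Min_Suc[of s] by auto
    have ss: "size ?t < size s" using ss2 by simp
    have IH: "ks (rho br l' s') \<subseteq> {w. size w \<le> size s' + 1}" if "size s' < size s" for l' s'
    proof -
      have *: "ks (rho br l' s') \<subseteq> ks (rho br l' s' - z (add_mset l' s')) \<union> ks (z (add_mset l' s') :: _ \<Rightarrow>\<^sub>0 'k)"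
        using keys_add[of "rho br l' s' - z (add_mset l' s')" "z (add_mset l' s')"] by simp
      show ?thesis
      proof
        fix x assume "x \<in> ks (rho br l' s')"
        then have "x \<in> ks (rho br l' s' - z (add_mset l' s')) \<or> x = add_mset l' s'" using * by auto
        then show "x \<in> {w. size w \<le> size s' + 1}" using less(1)[OF that, of l'] by auto
      qed
    qed
    have A: "ks (lx (rho br ?m) (trunc (size s - 1) (rho br l ?t - z (add_mset l ?t)))) \<subseteq> {w. size w \<le> size s}"
    proof (rule keys_ext_sub)
      fix w assume "w \<in> ks (trunc (size s - 1) (rho br l ?t - z (add_mset l ?t)))"
      then have "size w \<le> size s - 1" using keys_trunc by blast
      then have "size w < size s" using ss by linarith
      then show "ks (rho br ?m w) \<subseteq> {w. size w \<le> size s}"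
        using IH[of w ?m] \<open>size w \<le> size s - 1\<close> ss by auto
    qed
    have B: "ks (\<Sum>\<nu>\<in>ks (Bk br l ?m). sm (lk (Bk br l ?m) \<nu>) (rho br \<nu> ?t)) \<subseteq> {w. size w \<le> size s}"
      by (intro keys_sum_sub keys_sm_sub) (use IH[OF ss] ss2 in auto)
    have "rho br l s - z (add_mset l s) = lx (rho br ?m) (trunc (size s - 1) (rho br l ?t - z (add_mset l ?t)))
       + (\<Sum>\<nu>\<in>ks (Bk br l ?m). sm (lk (Bk br l ?m) \<nu>) (rho br \<nu> ?t))"
      using False by (subst rho_eq) simp
    then show ?thesis using keys_add_sub[OF A B] by simp
  qed
qed

lemma rho_keys2:
  fixes br :: "('j::linorder,'k::field) lie \<Rightarrow> ('j,'k) lie \<Rightarrow> ('j,'k) lie"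
  shows "ks (rho br l s) \<subseteq> {w. size w \<le> size s + 1}"
proof -
  have *: "ks (rho br l s) \<subseteq> ks (rho br l s - z (add_mset l s)) \<union> ks (z (add_mset l s) :: _ \<Rightarrow>\<^sub>0 'k)"
    using keys_add[of "rho br l s - z (add_mset l s)" "z (add_mset l s)"] by simp
  show ?thesis
  proof
    fix x assume "x \<in> ks (rho br l s)"
    then have "x \<in> ks (rho br l s - z (add_mset l s)) \<or> x = add_mset l s" using * by auto
    then show "x \<in> {w. size w \<le> size s + 1}" using rho_keys[of br l s] by auto
  qed
qed

definition Rj where "Rj br l y = lx (rho br l) y"
definition RL where "RL br x y = (\<Sum>j\<in>ks x. sm (lk x j) (Rj br j y))"

lemma Rj_z[simp]: "Rj br l (z s) = rho br l s"
  by (simp add: Rj_def)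

lemma rho_eq2:
  assumes "\<not> (s = {#} \<or> l \<le> Min (set_mset s))"
  shows "rho br l s = Rj br (Min (set_mset s)) (rho br l (s - {#Min (set_mset s)#}))
     + RL br (Bk br l (Min (set_mset s))) (z (s - {#Min (set_mset s)#}))"
proof -
  let ?m = "Min (set_mset s)" let ?t = "s - {#?m#}"
  have ne: "s \<noteq> {#}" using assms by auto
  have ml: "?m < l" using assms by auto
  have mt': "?m \<le> Min (set_mset (add_mset l ?t))"
  proof -
    have "\<forall>x\<in>set_mset (add_mset l ?t). ?m \<le> x"
      using ml ne by (auto dest: in_diffD)
    then show ?thesis by simp
  qed
  have sm_eq: "add_mset ?m ?t = s" using ne by simp
  have tr: "trunc (size s - 1) (rho br l ?t - z (add_mset l ?t)) = rho br l ?t - z (add_mset l ?t)"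
    apply (rule trunc_id) using rho_keys[of br l ?t] size_Min_minus[OF ne] by auto
  have r: "rho br ?m (add_mset l ?t) = z (add_mset l s)"
  proof -
    have e: "add_mset ?m (add_mset l ?t) = add_mset l s" using sm_eq by (metis add_mset_commute)
    have "rho br ?m (add_mset l ?t) = z (add_mset ?m (add_mset l ?t))"
      using rho_simple[of "add_mset l ?t" ?m br] mt' by blast
    then show ?thesis by (simp only: e)
  qed
  have 1: "rho br l s = z (add_mset l s) + lx (rho br ?m) (rho br l ?t - z (add_mset l ?t))
     + (\<Sum>\<nu>\<in>ks (Bk br l ?m). sm (lk (Bk br l ?m) \<nu>) (rho br \<nu> ?t))"
    using assms tr by (subst rho_eq) simp
  have 2: "lx (rho br ?m) (rho br l ?t - z (add_mset l ?t)) = Rj br ?m (rho br l ?t) - z (add_mset l s)"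
    by (simp add: ext_diff Rj_def r)
  have 3: "(\<Sum>\<nu>\<in>ks (Bk br l ?m). sm (lk (Bk br l ?m) \<nu>) (rho br \<nu> ?t)) = RL br (Bk br l ?m) (z ?t)"
    by (simp add: RL_def)
  show ?thesis using 1 2 3 by simp
qed


lemma lin_fun_diff: "lin F \<Longrightarrow> lin G \<Longrightarrow> lin (\<lambda>x. F x - G x)"
  by (simp add: lin_def sm_diff)
lemma lin_fun_add: "lin F \<Longrightarrow> lin G \<Longrightarrow> lin (\<lambda>x. F x + G x)"
  by (simp add: lin_def sm_add)
lemma lin_fun_sum: "(\<And>i. i \<in> A \<Longrightarrow> lin (F i)) \<Longrightarrow> lin (\<lambda>x. \<Sum>i\<in>A. F i x)"
  by (simp add: lin_def sm_sum sum.distrib)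
lemma lin_fun_sm: "lin F \<Longrightarrow> lin (\<lambda>x. sm c (F x))"
  by (simp add: lin_def sm_add mult.commute)

lemma lin_Rj: "lin (Rj br l)"
  unfolding Rj_def[abs_def] by (rule lin_ext)

lemma lin_RL: "lin (RL br x)"
  unfolding RL_def[abs_def] by (intro lin_fun_sum lin_fun_sm lin_Rj)

lemma RL_superset: "finite A \<Longrightarrow> ks x \<subseteq> A \<Longrightarrow> RL br x y = (\<Sum>j\<in>A. sm (lk x j) (Rj br j y))"
  unfolding RL_def by (rule sum.mono_neutral_left) (auto simp: in_keys_iff)

lemma RL_add_x: "RL br (x + x') y = RL br x y + RL br x' y"
proof -
  let ?A = "ks x \<union> ks x'"
  have "RL br (x + x') y = (\<Sum>j\<in>?A. sm (lk (x+x') j) (Rj br j y))"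
    by (rule RL_superset) (auto simp: keys_add)
  also have "\<dots> = (\<Sum>j\<in>?A. sm (lk x j) (Rj br j y)) + (\<Sum>j\<in>?A. sm (lk x' j) (Rj br j y))"
    by (simp add: lookup_add sm_add_left sum.distrib)
  also have "\<dots> = RL br x y + RL br x' y"
    by (simp add: RL_superset[of ?A x] RL_superset[of ?A x'])
  finally show ?thesis .
qed

lemma RL_sm_x: "RL br (sm c x) y = sm c (RL br x y)"
  by (subst RL_superset[OF finite_keys keys_sm]) (simp add: RL_def sm_sum)

lemma RL_0_x[simp]: "RL br 0 y = 0"
  by (simp add: RL_def)
lemma RL_neg_x: "RL br (- x) y = - RL br x y"
  using RL_sm_x[of br "-1" x y] by (simp add: sm_minus_one)
lemma RL_diff_x: "RL br (x - x') y = RL br x y - RL br x' y"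
  using RL_add_x[of br x "- x'" y] RL_neg_x[of br x' y] by simp
lemma RL_sum_x: "RL br (sum f A) y = (\<Sum>a\<in>A. RL br (f a) y)"
  by (induction A rule: infinite_finite_induct) (auto simp: RL_add_x)
lemma RL_z[simp]: "RL br (z l) y = Rj br l y"
  by (simp add: RL_def)

lemma RL_keys: "ks y \<subseteq> {w. size w \<le> n} \<Longrightarrow> ks (RL br x y) \<subseteq> {w. size w \<le> Suc n}"
  unfolding RL_def Rj_def
  apply (intro keys_sum_sub keys_sm_sub keys_ext_sub)
  using rho_keys2 by fastforce

lemma expand_lie: "x = (\<Sum>j\<in>ks x. sm (lk x j) (z j))"
  using expansion[of x] by (simp add: lx_def)

lemma lin_split3: "lin F \<Longrightarrow> lin G \<Longrightarrow> lin H \<Longrightarrow> F u = G u + H u \<Longrightarrow> F v = G v + H v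
  \<Longrightarrow> F (u + v) = G (u + v) + H (u + v)"
  by (simp add: lin_add)

locale lieb =
  fixes br :: "('j::linorder,'k::field) lie \<Rightarrow> ('j,'k) lie \<Rightarrow> ('j,'k) lie"
  assumes LB: "is_lie_bracket br"
begin

lemma br_add_left: "br (x + y) w = br x w + br y w" using LB by (simp add: is_lie_bracket_def)
lemma br_add_right: "br w (x + y) = br w x + br w y" using LB by (simp add: is_lie_bracket_def)
lemma br_sm_left: "br (sm c x) y = sm c (br x y)" using LB by (simp add: is_lie_bracket_def lsmult_sm)
lemma br_sm_right: "br x (sm c y) = sm c (br x y)" using LB by (simp add: is_lie_bracket_def lsmult_sm)
lemma br_alt: "br x x = 0" using LB by (simp add: is_lie_bracket_def)
lemma br_jac: "br x (br y w) + br y (br w x) + br w (br x y) = 0" using LB by (simp add: is_lie_bracket_def)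

lemma br_0_left[simp]: "br 0 y = 0" using br_sm_left[of 0 0 y] by simp
lemma br_0_right[simp]: "br y 0 = 0" using br_sm_right[of y 0 0] by simp
lemma br_neg_left: "br (- x) y = - br x y" using br_sm_left[of "-1" x y] by (simp add: sm_minus_one)
lemma br_neg_right: "br y (- x) = - br y x" using br_sm_right[of y "-1" x] by (simp add: sm_minus_one)
lemma br_antisym: "br y x = - br x y"
proof -
  have "0 = br (x + y) (x + y)" by (simp add: br_alt)
  also have "\<dots> = br x y + br y x" by (simp only: br_add_left br_add_right) (simp add: br_alt)
  finally have "br x y + br y x = 0" by simp
  then show ?thesis using neg_eq_iff_add_eq_0[of "br x y" "br y x"] by simp
qed
lemma br_sum_left: "br (sum f A) y = (\<Sum>a\<in>A. br (f a) y)"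
  by (induction A rule: infinite_finite_induct) (auto simp: br_add_left)
lemma br_sum_right: "br y (sum f A) = (\<Sum>a\<in>A. br y (f a))"
  by (induction A rule: infinite_finite_induct) (auto simp: br_add_right)

lemma br_expand: "br x y = (\<Sum>j\<in>ks x. \<Sum>j'\<in>ks y. sm (lk x j * lk y j') (Bk br j j'))"
proof -
  have "br x y = br (\<Sum>j\<in>ks x. sm (lk x j) (z j)) (\<Sum>j'\<in>ks y. sm (lk y j') (z j'))"
    using expand_lie[of x] expand_lie[of y] by simp
  also have "\<dots> = (\<Sum>j\<in>ks x. \<Sum>j'\<in>ks y. sm (lk x j * lk y j') (Bk br j j'))"
    unfolding Bk_def by (simp only: br_sum_left br_sum_right br_sm_left br_sm_right sm_sm sm_sum)
      (rule trans[OF sum.swap], simp add: mult.commute)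
  finally show ?thesis .
qed

lemma jac2: "br (br a c) b + br a (br b c) = br (br a b) c"
proof -
  have j: "br a (br b c) + br b (br c a) + br c (br a b) = 0" by (rule br_jac)
  have h1a: "br (br a c) b = - br b (br a c)" by (rule br_antisym)
  have h1b: "br a c = - br c a" by (rule br_antisym)
  have 1: "br (br a c) b = br b (br c a)" using h1a h1b br_neg_right[of b "br c a"] by simp
  have 2: "br (br a b) c = - br c (br a b)" by (rule br_antisym)
  have 3: "br a (br b c) + br b (br c a) = - br c (br a b)"
    using j eq_neg_iff_add_eq_0[of "br a (br b c) + br b (br c a)" "br c (br a b)"] by simp
  show ?thesis using 1 2 3 by (simp add: add.commute)
qed

abbreviation "Rjb \<equiv> Rj br"
abbreviation "RLb \<equiv> RL br"

lemma lift_comm: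
  assumes H: "\<And>s l m. s \<in> ks y \<Longrightarrow> Rjb l (Rjb m (z s)) - Rjb m (Rjb l (z s)) = RLb (Bk br l m) (z s)"
  shows "RLb x (RLb x' y) - RLb x' (RLb x y) = RLb (br x x') y"
proof -
  have S: "RLb x (RLb x' (z s)) - RLb x' (RLb x (z s)) = RLb (br x x') (z s)" if s: "s \<in> ks y" for s
  proof -
    let ?v = "z s :: _ \<Rightarrow>\<^sub>0 'k"
    have e1: "RLb x (RLb x' ?v) = (\<Sum>j\<in>ks x. \<Sum>j'\<in>ks x'. sm (lk x j * lk x' j') (Rjb j (Rjb j' ?v)))"
      by (simp add: RL_def lin_sum[OF lin_Rj] lin_sm[OF lin_Rj] sm_sum)
    have e2: "RLb x' (RLb x ?v) = (\<Sum>j\<in>ks x. \<Sum>j'\<in>ks x'. sm (lk x j * lk x' j') (Rjb j' (Rjb j ?v)))"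
      by (simp add: RL_def lin_sum[OF lin_Rj] lin_sm[OF lin_Rj] sm_sum sum.swap[of _ "ks x'"] mult.commute)
    have "RLb x (RLb x' ?v) - RLb x' (RLb x ?v) = (\<Sum>j\<in>ks x. \<Sum>j'\<in>ks x'. sm (lk x j * lk x' j') (Rjb j (Rjb j' ?v) - Rjb j' (Rjb j ?v)))"
      by (simp add: e1 e2 sm_diff sum_subtractf)
    also have "\<dots> = (\<Sum>j\<in>ks x. \<Sum>j'\<in>ks x'. sm (lk x j * lk x' j') (RLb (Bk br j j') ?v))"
      using H[OF s] by simp
    also have "\<dots> = RLb (br x x') ?v"
      by (simp add: br_expand[of x x'] RL_sum_x RL_sm_x)
    finally show ?thesis .
  qed
  have l1: "lin (\<lambda>y. RLb x (RLb x' y) - RLb x' (RLb x y))"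
    by (rule lin_fun_diff; rule lin_comp[OF lin_RL lin_RL])
  show ?thesis
    by (rule lin_eqI[OF l1 lin_RL]) (use S in auto)
qed

lemma Kstep:
  assumes "s = {#} \<or> m \<le> Min (set_mset s)" and "m < l"
  shows "Rjb l (Rjb m (z s)) = Rjb m (Rjb l (z s)) + RLb (Bk br l m) (z s)"
proof -
  have 1: "rho br m s = z (add_mset m s)" using rho_simple[OF assms(1)] .
  have mn: "Min (set_mset (add_mset m s)) = m"
    using assms by (cases "s = {#}") (auto simp: min_def)
  have nt: "\<not> (add_mset m s = {#} \<or> l \<le> Min (set_mset (add_mset m s)))"
    using assms mn by auto
  have e: "rho br l (add_mset m s) = Rj br m (rho br l s) + RL br (Bk br l m) (z s)"
    using rho_eq2[OF nt] unfolding mn by simp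
  show ?thesis using e by (simp add: 1)
qed

lemma Bk_anti: "Bk br m l = - Bk br l m"
  by (simp add: Bk_def br_antisym[of "z l" "z m"])

lemma comm_z: "Rjb l (Rjb m (z s)) - Rjb m (Rjb l (z s)) = RLb (Bk br l m) (z s)"
proof (induction "size s" arbitrary: l m s rule: less_induct)
  case less
  have Cs: "\<And>x x' y. ks y \<subseteq> {w. size w < size s} \<Longrightarrow> RLb x (RLb x' y) - RLb x' (RLb x y) = RLb (br x x') y"
    by (rule lift_comm) (use less in auto)
  show ?case
  proof (cases "l = m")
    case True then show ?thesis by (simp add: Bk_def br_alt)
  next
    case lm: False
    show ?thesis
    proof (cases "s = {#} \<or> min l m \<le> Min (set_mset s)")
      case True
      show ?thesis
      proof (cases "m < l")
        case True
        then have "s = {#} \<or> m \<le> Min (set_mset s)" using \<open>s = {#} \<or> min l m \<le> Min (set_mset s)\<close>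
          by (auto simp: min_def split: if_splits)
        from Kstep[OF this True] show ?thesis by simp
      next
        case False
        then have ml: "l < m" using lm by simp
        then have "s = {#} \<or> l \<le> Min (set_mset s)" using \<open>s = {#} \<or> min l m \<le> Min (set_mset s)\<close>
          by (auto simp: min_def split: if_splits)
        from Kstep[OF this ml] have "Rjb m (Rjb l (z s)) = Rjb l (Rjb m (z s)) + RLb (Bk br m l) (z s)" .
        moreover have "RLb (Bk br m l) (z s) = - RLb (Bk br l m) (z s)"
          by (simp only: Bk_anti[of m l] RL_neg_x)
        ultimately show ?thesis by simp
      qed
    next
      case False
      let ?n = "Min (set_mset s)" let ?t = "s - {#?n#}"
      have ne: "s \<noteq> {#}" using False by auto
      have nl: "?n < l" and nm: "?n < m" using False by (auto simp: min_def split: if_splits)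
      have st: "size ?t < size s" using size_Min_Suc[OF ne] by simp
      have tn: "?t = {#} \<or> ?n \<le> Min (set_mset ?t)"
      proof (cases "?t = {#}")
        case False
        then show ?thesis using ne by (auto dest: in_diffD)
      qed simp
      have sdec: "add_mset ?n ?t = s" using ne by simp
      let ?zt = "z ?t :: _ \<Rightarrow>\<^sub>0 'k"
      have zs0: "rho br ?n ?t = z (add_mset ?n ?t)" by (rule rho_simple[OF tn])
      have zs: "z s = Rjb ?n ?zt" using zs0 sdec by simp
      have Ct: "\<And>x x'. RLb x (RLb x' ?zt) - RLb x' (RLb x ?zt) = RLb (br x x') ?zt"
        by (rule Cs) (use st in auto)
      have step: "Rjb a (Rjb b (z s)) = Rjb ?n (Rjb a (Rjb b ?zt)) + RLb (Bk br a ?n) (Rjb b ?zt)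
           + Rjb a (RLb (Bk br b ?n) ?zt)" if an: "?n < a" and bn: "?n < b" for a b
      proof -
        have 2: "Rjb b (z s) = Rjb ?n (Rjb b ?zt) + RLb (Bk br b ?n) ?zt"
          using Kstep[OF tn bn] zs by simp
        let ?w = "Rjb b ?zt"
        let ?w' = "?w - z (add_mset b ?t)"
        have w'k: "ks ?w' \<subseteq> {w. size w < size s}"
          using rho_keys[of br b ?t] st by auto
        have c1: "Rjb a (Rjb ?n ?w') - Rjb ?n (Rjb a ?w') = RLb (Bk br a ?n) ?w'"
          using Cs[OF w'k, of "z a" "z ?n"] by (simp add: Bk_def)
        have tb: "add_mset b ?t = {#} \<or> ?n \<le> Min (set_mset (add_mset b ?t))"
          using bn by (auto dest!: in_diffD)
        have c2: "Rjb a (Rjb ?n (z (add_mset b ?t))) = Rjb ?n (Rjb a (z (add_mset b ?t))) + RLb (Bk br a ?n) (z (add_mset b ?t))"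
          by (rule Kstep[OF tb an])
        have wsplit: "?w = ?w' + z (add_mset b ?t)" by simp
        have c1': "Rjb a (Rjb ?n ?w') = Rjb ?n (Rjb a ?w') + RLb (Bk br a ?n) ?w'"
          using c1 by (simp add: diff_eq_eq add.commute)
        have c3: "Rjb a (Rjb ?n ?w) = Rjb ?n (Rjb a ?w) + RLb (Bk br a ?n) ?w"
          using lin_split3[OF lin_comp[OF lin_Rj lin_Rj] lin_comp[OF lin_Rj lin_Rj] lin_RL c1' c2]
          unfolding wsplit[symmetric] .
        show ?thesis using 2 c3 by (simp add: lin_add[OF lin_Rj])
      qed
      have A: "Rjb l (Rjb m (z s)) - Rjb m (Rjb l (z s)) =
          Rjb ?n (Rjb l (Rjb m ?zt) - Rjb m (Rjb l ?zt))
          + (RLb (Bk br l ?n) (Rjb m ?zt) - Rjb m (RLb (Bk br l ?n) ?zt))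
          + (Rjb l (RLb (Bk br m ?n) ?zt) - RLb (Bk br m ?n) (Rjb l ?zt))"
        using step[OF nl nm] step[OF nm nl] by (simp add: lin_diff[OF lin_Rj] algebra_simps)
      have B1: "Rjb l (Rjb m ?zt) - Rjb m (Rjb l ?zt) = RLb (Bk br l m) ?zt"
        using Ct[of "z l" "z m"] by (simp add: Bk_def)
      have B2: "RLb (Bk br l ?n) (Rjb m ?zt) - Rjb m (RLb (Bk br l ?n) ?zt) = RLb (br (Bk br l ?n) (z m)) ?zt"
        using Ct[of "Bk br l ?n" "z m"] by simp
      have B3: "Rjb l (RLb (Bk br m ?n) ?zt) - RLb (Bk br m ?n) (Rjb l ?zt) = RLb (br (z l) (Bk br m ?n)) ?zt"
        using Ct[of "z l" "Bk br m ?n"] by simp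
      have T: "RLb (Bk br l m) (z s) = Rjb ?n (RLb (Bk br l m) ?zt) + RLb (br (Bk br l m) (z ?n)) ?zt"
        using Ct[of "Bk br l m" "z ?n"] zs by (simp add: algebra_simps)
      have J: "br (Bk br l ?n) (z m) + br (z l) (Bk br m ?n) = br (Bk br l m) (z ?n)"
        unfolding Bk_def by (rule jac2)
      show ?thesis
        using A B1 B2 B3 T J by (simp add: RL_add_x[symmetric])
    qed
  qed
qed

theorem comm: "RLb x (RLb x' y) - RLb x' (RLb x y) = RLb (br x x') y"
  by (rule lift_comm) (rule comm_z)

end


type_synonym ('j,'k) M = "('j multiset \<Rightarrow>\<^sub>0 'k) \<times> ('j multiset \<Rightarrow>\<^sub>0 'k) \<times> ('j multiset \<Rightarrow>\<^sub>0 ('j multiset \<Rightarrow>\<^sub>0 'k))"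

definition smT :: "'k::field \<Rightarrow> ('a \<Rightarrow>\<^sub>0 ('b \<Rightarrow>\<^sub>0 'k)) \<Rightarrow> ('a \<Rightarrow>\<^sub>0 ('b \<Rightarrow>\<^sub>0 'k))" where
  "smT c F = Poly_Mapping.map (sm c) F"

lemma lookup_map0: "f 0 = 0 \<Longrightarrow> lk (Poly_Mapping.map f F) t = f (lk F t)"
  by transfer (simp add: when_def)

lemma lookup_smT[simp]: "lk (smT c F) t = sm c (lk F t)"
  by (simp add: smT_def lookup_map0)

definition msm :: "'k::field \<Rightarrow> ('j,'k) M \<Rightarrow> ('j,'k) M" where
  "msm c m = (sm c (fst m), sm c (fst (snd m)), smT c (snd (snd m)))"

lemma msm_Pair[simp]: "msm c (a, b, F) = (sm c a, sm c b, smT c F)"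
  by (simp add: msm_def)

lemma smT_add: "smT c (F + G) = smT c F + smT c G"
  by (rule poly_mapping_eqI) (simp add: lookup_add sm_add)
lemma smT_add_left: "smT (c + d) F = smT c F + smT d F"
  by (rule poly_mapping_eqI) (simp add: lookup_add sm_add_left)
lemma smT_smT[simp]: "smT c (smT d F) = smT (c * d) F"
  by (rule poly_mapping_eqI) simp
lemma smT_one[simp]: "smT 1 F = F"
  by (rule poly_mapping_eqI) simp
lemma smT_zero_left[simp]: "smT 0 F = 0"
  by (rule poly_mapping_eqI) simp
lemma smT_zero[simp]: "smT c 0 = 0"
  by (rule poly_mapping_eqI) simp

lemma msm_add: "msm c (m + m') = msm c m + msm c m'"
  by (simp add: msm_def sm_add smT_add)
lemma msm_add_left: "msm (c + d) m = msm c m + msm d m"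
  by (simp add: msm_def sm_add_left smT_add_left)
lemma msm_msm[simp]: "msm c (msm d m) = msm (c * d) m"
  by (simp add: msm_def)
lemma msm_one[simp]: "msm 1 m = m"
  by (simp add: msm_def)
lemma msm_zero_left[simp]: "msm 0 m = 0"
  by (simp add: msm_def zero_prod_def)
lemma msm_zero[simp]: "msm c 0 = 0"
  by (simp add: msm_def zero_prod_def)
lemma msm_sum: "msm c (sum f A) = (\<Sum>a\<in>A. msm c (f a))"
  by (induction A rule: infinite_finite_induct) (auto simp: msm_add)
lemma msm_minus_one: "msm (-1) m = - m"
  by (cases m) (simp add: msm_def sm_minus_one, rule poly_mapping_eqI, simp add: sm_minus_one)

definition linM :: "(('j,'k::field) M \<Rightarrow> ('j,'k) M) \<Rightarrow> bool" where
  "linM F \<longleftrightarrow> (\<forall>x y. F (x + y) = F x + F y) \<and> (\<forall>c x. F (msm c x) = msm c (F x))"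

lemma linM_add: "linM F \<Longrightarrow> F (x + y) = F x + F y" unfolding linM_def by blast
lemma linM_sm: "linM F \<Longrightarrow> F (msm c x) = msm c (F x)" unfolding linM_def by blast
lemma linM_I: "(\<And>x y. F (x + y) = F x + F y) \<Longrightarrow> (\<And>c x. F (msm c x) = msm c (F x)) \<Longrightarrow> linM F"
  unfolding linM_def by blast
lemma linM_comp: "linM F \<Longrightarrow> linM G \<Longrightarrow> linM (\<lambda>m. F (G m))"
  by (rule linM_I) (simp_all add: linM_add linM_sm)
lemma linM_zero: "linM F \<Longrightarrow> F 0 = 0"
  using linM_sm[of F 0 0] by simp
lemma linM_minus: "linM F \<Longrightarrow> F (- x) = - F x"
  using linM_sm[of F "-1" x] by (simp add: msm_minus_one)
lemma linM_diff: "linM F \<Longrightarrow> F (x - y) = F x - F y"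
  using linM_add[of F x "- y"] linM_minus[of F y] by simp
lemma linM_sum: "linM F \<Longrightarrow> F (sum g A) = (\<Sum>a\<in>A. F (g a))"
  by (induction A rule: infinite_finite_induct) (auto simp: linM_add linM_zero)

definition Ov :: "('j multiset \<Rightarrow>\<^sub>0 'k::field) \<Rightarrow> ('j multiset \<Rightarrow>\<^sub>0 ('j multiset \<Rightarrow>\<^sub>0 'k))" where
  "Ov v = Poly_Mapping.map (\<lambda>c. sm c (z {#})) v"

lemma lookup_Ov[simp]: "lk (Ov v) t = sm (lk v t) (z {#})"
  by (simp add: Ov_def lookup_map0)

lemma Ov_add: "Ov (v + w) = Ov v + Ov w"
  by (rule poly_mapping_eqI) (simp add: lookup_add sm_add_left)
lemma Ov_sm: "Ov (sm c v) = smT c (Ov v)"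
  by (rule poly_mapping_eqI) simp
lemma Ov_zero[simp]: "Ov 0 = 0"
  by (rule poly_mapping_eqI) simp

definition mapT :: "(('j multiset \<Rightarrow>\<^sub>0 'k::field) \<Rightarrow> ('j multiset \<Rightarrow>\<^sub>0 'k)) \<Rightarrow> ('j multiset \<Rightarrow>\<^sub>0 ('j multiset \<Rightarrow>\<^sub>0 'k)) \<Rightarrow> ('j multiset \<Rightarrow>\<^sub>0 ('j multiset \<Rightarrow>\<^sub>0 'k))" where
  "mapT f F = Poly_Mapping.map f F"

lemma lookup_mapT: "lin f \<Longrightarrow> lk (mapT f F) t = f (lk F t)"
  by (simp add: mapT_def lookup_map0 lin_zero)

lemma mapT_add: "lin f \<Longrightarrow> mapT f (F + G) = mapT f F + mapT f G"
  by (rule poly_mapping_eqI) (simp add: lookup_mapT lookup_add lin_add)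
lemma mapT_sm: "lin f \<Longrightarrow> mapT f (smT c F) = smT c (mapT f F)"
  by (rule poly_mapping_eqI) (simp add: lookup_mapT lin_sm)
lemma mapT_zero[simp]: "lin f \<Longrightarrow> mapT f 0 = 0"
  by (rule poly_mapping_eqI) (simp add: lookup_mapT lin_zero)

locale pbwk = lieb br for br :: "('j::linorder,'k::field) lie \<Rightarrow> ('j,'k) lie \<Rightarrow> ('j,'k) lie" +
  fixes k :: 'k
  assumes knz: "k \<noteq> 0"
begin

definition br2 where "br2 x y = sm (inverse k) (br x y)"

lemma LB2: "is_lie_bracket br2"
  unfolding is_lie_bracket_def br2_def lsmult_sm
  by (simp add: br_add_left br_add_right br_sm_left br_sm_right br_alt sm_add mult.commute
      flip: sm_add, simp add: br_jac)

sublocale L2: lieb br2 by (unfold_locales) (rule LB2)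

abbreviation "R1 \<equiv> RL br"
abbreviation "R2 \<equiv> RL br2"

definition actq :: "('j,'k) M \<Rightarrow> ('j,'k) M" where
  "actq m = (fst m, 0, 0)"

definition actL :: "('j,'k) lie \<Rightarrow> ('j,'k) M \<Rightarrow> ('j,'k) M" where
  "actL x m = (R2 x (fst m), R1 x (fst (snd m)), mapT (R1 x) (snd (snd m)) + Ov (R2 x (fst m)))"

lemma linM_actq: "linM actq"
  by (simp add: linM_def actq_def msm_def zero_prod_def)

lemma linM_actL: "linM (actL x)"
  unfolding linM_def actL_def
  by (simp add: msm_def lin_add[OF lin_RL] lin_sm[OF lin_RL] mapT_add[OF lin_RL] mapT_sm[OF lin_RL]
      Ov_add Ov_sm smT_add)

fun act :: "'j option list \<Rightarrow> ('j,'k) M \<Rightarrow> ('j,'k) M" where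
  "act [] m = m"
| "act (None # w) m = actq (act w m)"
| "act (Some j # w) m = actL (z j) (act w m)"

lemma linM_act: "linM (act w)"
proof (induction w)
  case Nil
  have "act [] = (\<lambda>m. m)" by (rule ext) simp
  then show ?case by (simp add: linM_I)
next
  case (Cons a w)
  show ?case
  proof (cases a)
    case None
    have "act (None # w) = (\<lambda>m. actq (act w m))" by (rule ext) simp
    then show ?thesis using None linM_comp[OF linM_actq Cons.IH] by simp
  next
    case (Some j)
    have "act (Some j # w) = (\<lambda>m. actL (z j) (act w m))" by (rule ext) simp
    then show ?thesis using Some linM_comp[OF linM_actL Cons.IH] by simp
  qed
qed

lemma act_append: "act (u @ v) m = act u (act v m)"
proof (induction u)
  case (Cons a u) then show ?case by (cases a) simp_all
qed simp

definition Act :: "('j,'k) tens \<Rightarrow> ('j,'k) M \<Rightarrow> ('j,'k) M" where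
  "Act f m = (\<Sum>w\<in>ks f. msm (lk f w) (act w m))"

lemma Act_superset: "finite A \<Longrightarrow> ks f \<subseteq> A \<Longrightarrow> Act f m = (\<Sum>w\<in>A. msm (lk f w) (act w m))"
  unfolding Act_def by (rule sum.mono_neutral_left) (auto simp: in_keys_iff)

lemma Act_add: "Act (f + g) m = Act f m + Act g m"
proof -
  let ?A = "ks f \<union> ks g"
  have "Act (f + g) m = (\<Sum>w\<in>?A. msm (lk (f+g) w) (act w m))"
    by (rule Act_superset) (auto simp: keys_add)
  also have "\<dots> = (\<Sum>w\<in>?A. msm (lk f w) (act w m)) + (\<Sum>w\<in>?A. msm (lk g w) (act w m))"
    by (simp add: lookup_add msm_add_left sum.distrib)
  also have "\<dots> = Act f m + Act g m"
    by (simp add: Act_superset[of ?A f] Act_superset[of ?A g])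
  finally show ?thesis .
qed

lemma Act_sm: "Act (sm c f) m = msm c (Act f m)"
  by (subst Act_superset[OF finite_keys keys_sm]) (simp add: Act_def msm_sum)

lemma Act_zero[simp]: "Act 0 m = 0"
  by (simp add: Act_def)
lemma Act_neg: "Act (- f) m = - Act f m"
  using Act_sm[of "-1" f m] by (simp add: sm_minus_one msm_minus_one)
lemma Act_diff: "Act (f - g) m = Act f m - Act g m"
  using Act_add[of f "- g" m] Act_neg[of g m] by simp
lemma Act_sum: "Act (sum f A) m = (\<Sum>a\<in>A. Act (f a) m)"
  by (induction A rule: infinite_finite_induct) (auto simp: Act_add)

lemma Act_wd[simp]: "Act (wd w) m = act w m"
  by (simp add: Act_def wd_def)

lemma Act_lx: "Act (lx h g) m = (\<Sum>v\<in>ks g. msm (lk g v) (Act (h v) m))"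
  by (simp add: lx_def Act_sum Act_sm)

lemma linM_Act: "linM (Act f)"
  unfolding linM_def Act_def
  by (simp add: linM_add[OF linM_act] linM_sm[OF linM_act] msm_add sum.distrib msm_sum mult.commute)

lemma Act_wd_mult: "Act (wd u \<star> g) m = act u (Act g m)"
proof -
  have "wd u \<star> g = lx (\<lambda>v. wd (u @ v)) g"
    by (simp add: tmult_lx2 wd_def)
  then have "Act (wd u \<star> g) m = (\<Sum>v\<in>ks g. msm (lk g v) (act u (act v m)))"
    by (simp add: Act_lx act_append)
  also have "\<dots> = act u (Act g m)"
    by (simp add: Act_def linM_sum[OF linM_act] linM_sm[OF linM_act])
  finally show ?thesis .
qed

lemma Act_mult: "Act (f \<star> g) m = Act f (Act g m)"
proof -
  have "f \<star> g = lx (\<lambda>u. wd u \<star> g) f"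
    using lin_comp_ext[OF lin_tmult_left[of g], of wd f] unfolding wd_lx[of f, symmetric] .
  then have "Act (f \<star> g) m = (\<Sum>u\<in>ks f. msm (lk f u) (act u (Act g m)))"
    by (simp add: Act_lx Act_wd_mult)
  then show ?thesis by (simp only: Act_def[of f])
qed

lemma Act_qt[simp]: "Act qt m = actq m"
  by (simp add: qt_def)

lemma actL_add_x: "actL (x + y) m = actL x m + actL y m"
  unfolding actL_def
  by (simp add: RL_add_x, rule poly_mapping_eqI,
      simp add: lookup_add lookup_mapT[OF lin_RL] RL_add_x Ov_add algebra_simps)

lemma actL_sm_x: "actL (sm c x) m = msm c (actL x m)"
  unfolding actL_def
  by (simp add: RL_sm_x, rule poly_mapping_eqI,
      simp add: lookup_add lookup_mapT[OF lin_RL] RL_sm_x Ov_sm sm_add)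

lemma actL_0_x: "actL 0 m = 0"
  using actL_sm_x[of 0 0 m] by simp

lemma actL_sum_x: "actL (sum f A) m = (\<Sum>a\<in>A. actL (f a) m)"
  by (induction A rule: infinite_finite_induct) (auto simp: actL_add_x actL_0_x)

lemma Act_emb: "Act (emb x) m = actL x m"
proof -
  have "Act (emb x) m = (\<Sum>j\<in>ks x. msm (lk x j) (actL (z j) m))"
    by (simp add: emb_lx Act_lx)
  also have "\<dots> = actL (\<Sum>j\<in>ks x. sm (lk x j) (z j)) m"
    by (simp only: actL_sum_x actL_sm_x)
  also have "\<dots> = actL x m"
    using expand_lie[of x] by simp
  finally show ?thesis .
qed

end


context pbwk
begin

lemma fst_actq[simp]: "fst (actq m) = fst m" by (simp add: actq_def)
lemma fst_actL[simp]: "fst (actL x m) = R2 x (fst m)" by (simp add: actL_def)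

lemma fst_act: "fst m = fst m' \<Longrightarrow> fst (act w m) = fst (act w m')"
proof (induction w)
  case (Cons a w) then show ?case by (cases a) simp_all
qed simp

lemma fst_msm[simp]: "fst (msm c m) = sm c (fst m)" by (simp add: msm_def)

lemma fst_Act: "fst m = fst m' \<Longrightarrow> fst (Act f m) = fst (Act f m')"
  by (simp add: Act_def fst_sum fst_act[of m m'])

lemma Act_gen_I: "g \<in> gens_I \<Longrightarrow> Act g m = 0"
proof -
  assume "g \<in> gens_I"
  then consider "g = qt \<star> qt - qt" | a where "g = qt \<star> a \<star> qt - qt \<star> a"
    unfolding gens_I_def by blast
  then show ?thesis
  proof cases
    case 1 then show ?thesis by (simp add: Act_diff Act_mult actq_def)
  next
    case 2
    have "fst (Act a (actq m)) = fst (Act a m)" by (rule fst_Act) simp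
    then show ?thesis using 2 by (simp add: Act_diff Act_mult actq_def)
  qed
qed

lemma comm1: "R1 x (R1 y v) = R1 y (R1 x v) + R1 (br x y) v"
  using comm[of x y v] by (simp add: diff_eq_eq add.commute)

lemma comm2: "R2 x (R2 y v) = R2 y (R2 x v) + sm (inverse k) (R2 (br x y) v)"
  using L2.comm[of x y v] by (simp add: diff_eq_eq add.commute br2_def RL_sm_x)

lemma kinv: "sm k (sm (inverse k) v) = v"
  using knz by simp

lemma Act_gen_R: "g \<in> gens_R br k \<Longrightarrow> Act g m = 0"
proof -
  assume "g \<in> gens_R br k"
  then obtain x y where g: "g = emb (br x y) - emb x \<star> emb y + emb y \<star> emb x
                  + emb x \<star> emb y \<star> qt - emb y \<star> emb x \<star> qt
                  - tsmult k (emb x \<star> qt \<star> emb y) + tsmult k (emb y \<star> qt \<star> emb x)"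
    unfolding gens_R_def by blast
  obtain a b F where m: "m = (a, b, F)" by (cases m)
  have "Act g m = actL (br x y) m - actL x (actL y m) + actL y (actL x m)
     + actL x (actL y (actq m)) - actL y (actL x (actq m))
     - msm k (actL x (actq (actL y m))) + msm k (actL y (actq (actL x m)))"
    by (simp add: g Act_add Act_diff Act_sm tsmult_sm Act_mult Act_emb)
  also have "\<dots> = 0"
  proof -
    have c1: "R2 (br x y) a - R2 x (R2 y a) + R2 y (R2 x a) + R2 x (R2 y a) - R2 y (R2 x a)
       - sm k (R2 x (R2 y a)) + sm k (R2 y (R2 x a)) = 0"
      by (simp add: comm2[of x y a] sm_add knz)
    have c2: "R1 (br x y) b - R1 x (R1 y b) + R1 y (R1 x b) = 0"
      by (simp add: comm1[of x y b])
    have c3: "mapT (R1 (br x y)) F + Ov (R2 (br x y) a)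
      - (mapT (R1 x) (mapT (R1 y) F + Ov (R2 y a)) + Ov (R2 x (R2 y a)))
      + (mapT (R1 y) (mapT (R1 x) F + Ov (R2 x a)) + Ov (R2 y (R2 x a)))
      + (mapT (R1 x) (Ov (R2 y a)) + Ov (R2 x (R2 y a)))
      - (mapT (R1 y) (Ov (R2 x a)) + Ov (R2 y (R2 x a)))
      - smT k (Ov (R2 x (R2 y a))) + smT k (Ov (R2 y (R2 x a))) = 0"
    proof (rule poly_mapping_eqI)
      fix t
      have E: "R2 (br x y) a = sm k (R2 x (R2 y a)) - sm k (R2 y (R2 x a))"
        by (simp add: comm2[of x y a] sm_add knz)
      have lkE: "lk (R2 (br x y) a) t = k * lk (R2 x (R2 y a)) t - k * lk (R2 y (R2 x a)) t"
        by (subst E) (simp add: lookup_minus)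
      show "lk (mapT (R1 (br x y)) F + Ov (R2 (br x y) a)
      - (mapT (R1 x) (mapT (R1 y) F + Ov (R2 y a)) + Ov (R2 x (R2 y a)))
      + (mapT (R1 y) (mapT (R1 x) F + Ov (R2 x a)) + Ov (R2 y (R2 x a)))
      + (mapT (R1 x) (Ov (R2 y a)) + Ov (R2 x (R2 y a)))
      - (mapT (R1 y) (Ov (R2 x a)) + Ov (R2 y (R2 x a)))
      - smT k (Ov (R2 x (R2 y a))) + smT k (Ov (R2 y (R2 x a)))) t = lk 0 t"
        by (simp add: lkE lookup_add lookup_minus lookup_mapT[OF lin_RL] lin_add[OF lin_RL]
            comm1[of x y] sm_diff_left[symmetric] sm_add_left[symmetric] algebra_simps
            del: sm_single)
    qed
    show ?thesis
      using c1 c2 c3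
      by (simp add: m actL_def actq_def lin_zero[OF lin_RL] mapT_zero[OF lin_RL] prod_eq_iff
          msm_def algebra_simps)
  qed
  finally show ?thesis .
qed

lemma Act_ideal: "f \<in> ideal_U br k \<Longrightarrow> Act f m = 0"
  unfolding ideal_U_def
proof (induction arbitrary: m rule: ideal_gen.induct)
  case zero then show ?case by simp
next
  case (gen g a b)
  have "Act g (Act b m) = 0" using gen Act_gen_I Act_gen_R by blast
  then show ?case by (simp add: Act_mult linM_zero[OF linM_Act])
next
  case (add f h) then show ?case by (simp add: Act_add)
qed

end


lemma sorted_mset_inj: "sorted u \<Longrightarrow> sorted v \<Longrightarrow> mset u = mset v \<Longrightarrow> u = v"
  by (metis properties_for_sort)

lemma sorted_Min: "sorted (x # u) \<Longrightarrow> mset u = {#} \<or> x \<le> Min (set_mset (mset u))"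
  by (cases "u = []") (auto simp: Min_ge_iff)

lemma sum_single_out: "finite K \<Longrightarrow> w0 \<in> K \<Longrightarrow> (\<And>w. w \<in> K \<Longrightarrow> w \<noteq> w0 \<Longrightarrow> f w = 0) \<Longrightarrow> sum f K = f w0"
  by (simp add: sum.remove sum.neutral)

lemma pbw_cases:
  "w \<in> pbw_words \<Longrightarrow> (\<exists>v. sorted v \<and> w = None # map Some v)
     \<or> (\<exists>u j v. sorted u \<and> sorted (j # v) \<and> w = map Some u @ [Some j, None] @ map Some v)
     \<or> (\<exists>u. sorted u \<and> w = map Some u)"
  unfolding pbw_words_def by blast

context pbwk
begin

definition one :: "('j,'k) M" where "one = (z {#}, z {#}, 0)"

lemma act_sorted:
  "sorted u \<Longrightarrow> fst (act (map Some u) one) = z (mset u) \<and> fst (snd (act (map Some u) one)) = z (mset u)"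
proof (induction u)
  case Nil then show ?case by (simp add: one_def)
next
  case (Cons x u)
  then have su: "sorted u" by simp
  have m: "mset u = {#} \<or> x \<le> Min (set_mset (mset u))" by (rule sorted_Min[OF Cons.prems])
  show ?case using Cons.IH[OF su] rho_simple[OF m, of br] rho_simple[OF m, of br2]
    by (simp add: actL_def)
qed

lemma act_fam1: "sorted v \<Longrightarrow> act (None # map Some v) one = (z (mset v), 0, 0)"
  using act_sorted[of v] by (simp add: actq_def)

lemma RL_keys_lt:
  fixes br' :: "('j,'k) lie \<Rightarrow> ('j,'k) lie \<Rightarrow> ('j,'k) lie"
  assumes "ks y \<subseteq> {s. size s < n}" shows "ks (RL br' x y) \<subseteq> {s. size s < Suc n}"
proof (cases n)
  case 0
  then have "y = 0" using assms by auto
  then show ?thesis by (simp add: lin_zero[OF lin_RL])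
next
  case (Suc n')
  then have "ks y \<subseteq> {s. size s \<le> n'}" using assms by auto
  from RL_keys[OF this, of br' x] show ?thesis using Suc by auto
qed

lemma act_mid:
  "sorted u \<Longrightarrow> fst (snd (act (map Some u) (z w, 0, Ov (z w)))) = 0 \<and>
    (\<forall>t. ks (lk (snd (snd (act (map Some u) (z w, 0, Ov (z w))))) t - (if t = w then z (mset u) else 0))
           \<subseteq> {s. size s < length u})"
proof (induction u)
  case Nil
  show ?case by (simp add: lookup_single when_def)
next
  case (Cons x u)
  then have su: "sorted u" by simp
  have m: "mset u = {#} \<or> x \<le> Min (set_mset (mset u))" by (rule sorted_Min[OF Cons.prems])
  obtain A B F where S: "act (map Some u) (z w, 0, Ov (z w)) = (A, B, F)" by (cases "act (map Some u) (z w, 0, Ov (z w))")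
  have B: "B = 0" and D: "\<And>t. ks (lk F t - (if t = w then z (mset u) else 0)) \<subseteq> {s. size s < length u}"
    using Cons.IH[OF su] S by auto
  have new: "act (map Some (x # u)) (z w, 0, Ov (z w)) = (R2 (z x) A, 0, mapT (R1 (z x)) F + Ov (R2 (z x) A))"
    using S B by (simp add: actL_def lin_zero[OF lin_RL])
  have "ks (lk (mapT (R1 (z x)) F + Ov (R2 (z x) A)) t - (if t = w then z (mset (x # u)) else 0))
      \<subseteq> {s. size s < length (x # u)}" for t
  proof -
    let ?E = "(if t = w then z (mset u) else 0) :: _ \<Rightarrow>\<^sub>0 'k"
    let ?D = "lk F t - ?E"
    have e1: "R1 (z x) ?E = (if t = w then z (mset (x # u)) else 0)"
      using rho_simple[OF m, of br] by (simp add: lin_zero[OF lin_RL] lin_zero[OF lin_Rj])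
    have "lk (mapT (R1 (z x)) F + Ov (R2 (z x) A)) t - (if t = w then z (mset (x # u)) else 0)
        = R1 (z x) ?D + sm (lk (R2 (z x) A) t) (z {#})"
      by (simp add: lookup_add lookup_mapT[OF lin_RL] lin_diff[OF lin_RL] e1 del: Rj_z RL_z)
    moreover have "ks (R1 (z x) ?D) \<subseteq> {s. size s < length (x # u)}"
      using RL_keys_lt[OF D[of t], of br "z x"] by simp
    moreover have "ks (sm (lk (R2 (z x) A) t) (z {#}) :: _ \<Rightarrow>\<^sub>0 'k) \<subseteq> {s. size s < length (x # u)}"
      using keys_sm[of "lk (R2 (z x) A) t" "z {#} :: _ \<Rightarrow>\<^sub>0 'k"] by auto
    ultimately show ?thesis using keys_add_sub by metis
  qed
  then show ?case using new by simp
qed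

end


lemma tw_mid: "takeWhile (\<lambda>x. x \<noteq> None) (map Some u @ [Some j, None] @ rest) = map Some u @ [Some j]"
  by (induction u) auto

context pbwk
begin

lemma snd_fst_fam: "w \<in> pbw_words \<Longrightarrow> fst (snd (act w one)) = (if None \<in> set w then 0 else z (mset (map the w)))"
proof -
  assume "w \<in> pbw_words"
  then consider (f1) v where "sorted v" "w = None # map Some v"
    | (f2) u j v where "sorted u" "sorted (j # v)" "w = map Some u @ [Some j, None] @ map Some v"
    | (f3) u where "sorted u" "w = map Some u"
    using pbw_cases by blast
  then show ?thesis
  proof cases
    case f1 then show ?thesis by (simp add: actq_def)
  next
    case f2
    have r: "rho br2 j (mset v) = z (add_mset j (mset v))"
      by (rule rho_simple[OF sorted_Min[OF f2(2)]])
    have sv: "sorted v" using f2(2) by simp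
    have q: "actq (act (map Some v) one) = (z (mset v), 0, 0)"
      using act_sorted[OF sv] by (simp add: actq_def)
    have "act w one = act (map Some u) (actL (z j) (actq (act (map Some v) one)))"
      using f2(3) by (simp add: act_append)
    also have "\<dots> = act (map Some u) (z (mset (j # v)), 0, Ov (z (mset (j # v))))"
      by (simp only: q) (simp add: actL_def r lin_zero[OF lin_RL] mapT_zero[OF lin_RL])
    finally have "act w one = act (map Some u) (z (mset (j # v)), 0, Ov (z (mset (j # v))))" .
    then show ?thesis using act_mid[OF f2(1)] f2(3) by simp
  next
    case f3 then show ?thesis using act_sorted[of u] by (simp add: comp_def)
  qed
qed

lemma pbw_sorted_noNone: "w \<in> pbw_words \<Longrightarrow> None \<notin> set w \<Longrightarrow> sorted (map the w) \<and> w = map Some (map the w)"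
  using pbw_cases[of w] by (auto simp: comp_def)

lemma fst_snd_msm: "fst (snd (msm c m)) = sm c (fst (snd m))" by (simp add: msm_def)
lemma snd_snd_msm: "snd (snd (msm c m)) = smT c (snd (snd m))" by (simp add: msm_def)

lemma act_f2: "sorted u \<Longrightarrow> sorted (j # v) \<Longrightarrow>
   act (map Some u @ [Some j, None] @ map Some v) one = act (map Some u) (z (mset (j # v)), 0, Ov (z (mset (j # v))))"
proof -
  assume su: "sorted u" and sjv: "sorted (j # v)"
  have r: "rho br2 j (mset v) = z (add_mset j (mset v))"
    by (rule rho_simple[OF sorted_Min[OF sjv]])
  have sv: "sorted v" using sjv by simp
  have q: "actq (act (map Some v) one) = (z (mset v), 0, 0)"
    using act_sorted[OF sv] by (simp add: actq_def)
  have "act (map Some u @ [Some j, None] @ map Some v) one = act (map Some u) (actL (z j) (actq (act (map Some v) one)))"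
    by (simp add: act_append)
  also have "\<dots> = act (map Some u) (z (mset (j # v)), 0, Ov (z (mset (j # v))))"
    by (simp only: q) (simp add: actL_def r lin_zero[OF lin_RL] mapT_zero[OF lin_RL])
  finally show ?thesis .
qed

lemma third_mid:
  assumes su: "sorted u" and sjv: "sorted (j # v)" and sz: "length u \<le> size s"
  shows "lk (lk (snd (snd (act (map Some u @ [Some j, None] @ map Some v) one))) t) s
     = (if t = mset (j # v) \<and> s = mset u then 1 else 0)"
proof -
  let ?F = "snd (snd (act (map Some u @ [Some j, None] @ map Some v) one))"
  let ?E = "(if t = mset (j # v) then z (mset u) else 0) :: _ \<Rightarrow>\<^sub>0 'k"
  have D: "ks (lk ?F t - ?E) \<subseteq> {s. size s < length u}"
    using act_mid[OF su, of "mset (j # v)"] act_f2[OF su sjv] by simp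
  then have "s \<notin> ks (lk ?F t - ?E)" using sz by auto
  then have "lk (lk ?F t - ?E) s = 0" by (simp add: in_keys_iff)
  then have "lk (lk ?F t) s = lk ?E s" by (simp add: lookup_minus)
  then show ?thesis by (auto simp: lookup_single when_def)
qed

theorem indep: "g \<in> ideal_U br k \<Longrightarrow> ks g \<subseteq> pbw_words \<Longrightarrow> g = 0"
proof -
  assume gN: "g \<in> ideal_U br k" and gK: "ks g \<subseteq> pbw_words"
  let ?K = "ks g"
  have Z: "Act g one = 0" by (rule Act_ideal[OF gN])
  have AS: "Act g one = (\<Sum>w\<in>?K. msm (lk g w) (act w one))" by (simp add: Act_def)
  have A: "None \<in> set w" if w0: "w \<in> ?K" for w
  proof (rule ccontr)
    assume nn: "None \<notin> set w"
    let ?u0 = "map the w"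
    have su0: "sorted ?u0" and wu: "w = map Some ?u0" using pbw_sorted_noNone[OF _ nn] gK w0 by auto
    have "lk (fst (snd (Act g one))) (mset ?u0) = (\<Sum>w'\<in>?K. lk g w' * lk (fst (snd (act w' one))) (mset ?u0))"
      by (simp add: AS snd_sum fst_sum lookup_sum fst_snd_msm)
    also have "\<dots> = lk g w * lk (fst (snd (act w one))) (mset ?u0)"
    proof (rule sum_single_out[OF finite_keys w0])
      fix w' assume w': "w' \<in> ?K" "w' \<noteq> w"
      show "lk g w' * lk (fst (snd (act w' one))) (mset ?u0) = 0"
      proof (cases "None \<in> set w'")
        case True then show ?thesis using snd_fst_fam[of w'] gK w' by auto
      next
        case False
        then have s': "sorted (map the w')" and w'u: "w' = map Some (map the w')"
          using pbw_sorted_noNone[of w'] gK w' by auto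
        have "mset (map the w') \<noteq> mset ?u0"
        proof
          assume "mset (map the w') = mset ?u0"
          then have "map the w' = ?u0" using sorted_mset_inj[OF s' su0] by simp
          then show False using w'u wu w' by metis
        qed
        moreover have "fst (snd (act w' one)) = z (mset (map the w'))"
          using snd_fst_fam[of w'] gK w'(1) False by auto
        ultimately show ?thesis by (simp add: lookup_single when_def del: mset_map)
      qed
    qed
    also have "\<dots> = lk g w"
    proof -
      have "fst (snd (act w one)) = z (mset ?u0)" using snd_fst_fam[of w] gK w0 nn by auto
      then show ?thesis by simp
    qed
    finally have "lk g w = 0" using Z by simp
    then show False using w0 by (simp add: in_keys_iff)
  qed
  define lenU :: "'j option list \<Rightarrow> nat" where "lenU w = length (takeWhile (\<lambda>x. x \<noteq> None) w) - 1" for w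
  have lenU_mid: "lenU (map Some u @ [Some j, None] @ map Some v) = length u" for u j v
    unfolding lenU_def tw_mid by simp
  have mid: "\<exists>u j v. sorted u \<and> sorted (j # v) \<and> w' = map Some u @ [Some j, None] @ map Some v"
    if "w' \<in> ?K" "hd w' \<noteq> None" for w'
  proof -
    have "w' \<in> pbw_words" using gK that by auto
    from pbw_cases[OF this] show ?thesis
    proof (elim disjE exE conjE)
      fix v assume "w' = None # map Some v" then show ?thesis using that by simp
    next
      fix u j v assume "sorted u" "sorted (j # v)" "w' = map Some u @ [Some j, None] @ map Some v"
      then show ?thesis by blast
    next
      fix u assume "sorted u" "w' = map Some u" then show ?thesis using A[of w'] that by auto
    qed
  qed
  have f1: "\<exists>v. sorted v \<and> w' = None # map Some v" if "w' \<in> ?K" "hd w' = None" for w'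
  proof -
    have "w' \<in> pbw_words" using gK that by auto
    from pbw_cases[OF this] show ?thesis
    proof (elim disjE exE conjE)
      fix v assume "sorted v" "w' = None # map Some v" then show ?thesis by blast
    next
      fix u j v assume "sorted u" "sorted (j # v)" "w' = map Some u @ [Some j, None] @ map Some v"
      then show ?thesis using that by (cases u) auto
    next
      fix u assume "sorted u" "w' = map Some u" then show ?thesis using A[of w'] that by auto
    qed
  qed
  have B: "hd w = None" if w0: "w \<in> ?K" for w
  proof (rule ccontr)
    assume "hd w \<noteq> None"
    let ?K2 = "{w \<in> ?K. hd w \<noteq> None}"
    have ne: "?K2 \<noteq> {}" using w0 \<open>hd w \<noteq> None\<close> by auto
    have fin: "finite ?K2" by simp
    let ?M = "Max (lenU ` ?K2)"
    have "?M \<in> lenU ` ?K2" by (rule Max_in) (use fin ne in auto)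
    then obtain w0 where w0K: "w0 \<in> ?K2" and w0M: "lenU w0 = ?M"
      by (metis (no_types, lifting) imageE)
    have maxU: "lenU w' \<le> lenU w0" if "w' \<in> ?K2" for w'
      using Max_ge[of "lenU ` ?K2"] fin that w0M by auto
    obtain u0 j0 v0 where su0: "sorted u0" and sjv0: "sorted (j0 # v0)"
        and w0d: "w0 = map Some u0 @ [Some j0, None] @ map Some v0"
      using mid[of w0] w0K by auto
    let ?t0 = "mset (j0 # v0)" let ?s0 = "mset u0"
    have "lk (lk (snd (snd (Act g one))) ?t0) ?s0
        = (\<Sum>w'\<in>?K. lk g w' * lk (lk (snd (snd (act w' one))) ?t0) ?s0)"
      by (simp add: AS snd_sum lookup_sum snd_snd_msm del: mset.simps)
    also have "\<dots> = lk g w0 * lk (lk (snd (snd (act w0 one))) ?t0) ?s0"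
    proof (rule sum_single_out[OF finite_keys])
      show "w0 \<in> ?K" using w0K by simp
      fix w' assume w': "w' \<in> ?K" "w' \<noteq> w0"
      show "lk g w' * lk (lk (snd (snd (act w' one))) ?t0) ?s0 = 0"
      proof (cases "hd w' = None")
        case True
        then obtain v where "sorted v" "w' = None # map Some v" using f1 w' by blast
        then show ?thesis by (simp add: actq_def)
      next
        case False
        then obtain u j v where su: "sorted u" and sjv: "sorted (j # v)"
          and w'd: "w' = map Some u @ [Some j, None] @ map Some v" using mid w' by blast
        have "length u \<le> size ?s0" using maxU[of w'] w' False w'd w0d lenU_mid by auto
        then have "lk (lk (snd (snd (act w' one))) ?t0) ?s0 = (if ?t0 = mset (j # v) \<and> ?s0 = mset u then 1 else 0)"
          using third_mid[OF su sjv] w'd by simp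
        also have "\<dots> = 0"
        proof (rule ccontr)
          assume "(if ?t0 = mset (j # v) \<and> ?s0 = mset u then 1 else 0) \<noteq> (0::'k)"
          then have "?t0 = mset (j # v)" "?s0 = mset u" by (auto split: if_splits)
          then have "j # v = j0 # v0" "u = u0" using sorted_mset_inj sjv sjv0 su su0 by metis+
          then show False using w' w'd w0d by simp
        qed
        finally show ?thesis by simp
      qed
    qed
    also have "\<dots> = lk g w0" using third_mid[OF su0 sjv0, of ?s0 ?t0] w0d by simp
    finally have "lk g w0 = 0" using Z by simp
    then show False using w0K by (simp add: in_keys_iff)
  qed
  have C: "?K = {}"
  proof (rule ccontr)
    assume "?K \<noteq> {}"
    then obtain w0 where w0: "w0 \<in> ?K" by blast
    obtain v0 where sv0: "sorted v0" and w0d: "w0 = None # map Some v0" using f1[OF w0 B[OF w0]] by blast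
    have "lk (fst (Act g one)) (mset v0) = (\<Sum>w'\<in>?K. lk g w' * lk (fst (act w' one)) (mset v0))"
      by (simp add: AS fst_sum lookup_sum del: mset.simps)
    also have "\<dots> = lk g w0 * lk (fst (act w0 one)) (mset v0)"
    proof (rule sum_single_out[OF finite_keys w0])
      fix w' assume w': "w' \<in> ?K" "w' \<noteq> w0"
      obtain v where sv: "sorted v" and w'd: "w' = None # map Some v" using f1[OF w'(1) B[OF w'(1)]] by blast
      have "mset v \<noteq> mset v0"
      proof
        assume "mset v = mset v0"
        then have "v = v0" using sorted_mset_inj[OF sv sv0] by simp
        then show False using w' w'd w0d by simp
      qed
      then show "lk g w' * lk (fst (act w' one)) (mset v0) = 0"
        using act_fam1[OF sv] w'd by (simp add: lookup_single when_def del: act.simps mset_map)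
    qed
    also have "\<dots> = lk g w0" using act_fam1[OF sv0] w0d by (simp del: act.simps)
    finally have "lk g w0 = 0" using Z by simp
    then show False using w0 by (simp add: in_keys_iff)
  qed
  then show "g = 0" by simp
qed

end


fun xs :: "'j option list \<Rightarrow> 'j list" where
  "xs [] = []" | "xs (None # w) = xs w" | "xs (Some j # w) = j # xs w"
fun nq :: "'j option list \<Rightarrow> nat" where
  "nq [] = 0" | "nq (None # w) = Suc (nq w)" | "nq (Some j # w) = nq w"
fun qp :: "'j option list \<Rightarrow> nat" where
  "qp [] = 0" | "qp (None # w) = 0" | "qp (Some j # w) = Suc (qp w)"
fun inv :: "'j::linorder list \<Rightarrow> nat" where
  "inv [] = 0" | "inv (x # l) = length (filter (\<lambda>y. y < x) l) + inv l"

lemma xs_append[simp]: "xs (a @ b) = xs a @ xs b"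
  by (induction a rule: xs.induct) auto
lemma nq_append[simp]: "nq (a @ b) = nq a + nq b"
  by (induction a rule: nq.induct) auto
lemma xs_map[simp]: "xs (map Some u) = u"
  by (induction u) auto
lemma nq_map[simp]: "nq (map Some u) = 0"
  by (induction u) auto
lemma qp_map_None[simp]: "qp (map Some u @ None # t) = length u"
  by (induction u) auto
lemma qp_map[simp]: "qp (map Some u) = length u"
  by (induction u) auto
lemma qp_map_app[simp]: "qp (map Some u @ t) = length u + qp t"
  by (induction u) auto

lemma inv_swap: "x > y \<Longrightarrow> inv (a @ [x, y] @ b) = Suc (inv (a @ [y, x] @ b))"
proof (induction a)
  case Nil then show ?case by simp
next
  case (Cons c a)
  have "length (filter (\<lambda>y. y < c) (a @ [x, y] @ b)) = length (filter (\<lambda>y. y < c) (a @ [y, x] @ b))"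
    by simp
  then show ?case using Cons by simp
qed

lemma nq_None: "nq w > 0 \<Longrightarrow> None \<in> set w"
  by (induction w rule: nq.induct) auto

lemma nq_pos_split: "nq w \<ge> 2 \<Longrightarrow> \<exists>P t. w = P @ None # t \<and> None \<in> set P"
proof (induction w rule: nq.induct)
  case 1 then show ?case by simp
next
  case (2 w)
  then have "None \<in> set w" using nq_None[of w] by simp
  then obtain a b where "w = a @ None # b" by (meson split_list)
  then show ?case by (rule_tac x="None # a" in exI) auto
next
  case (3 j w)
  then obtain P t where "w = P @ None # t \<and> None \<in> set P" by auto
  then show ?case by (rule_tac x="Some j # P" in exI) auto
qed

lemma nq0: "nq w = 0 \<Longrightarrow> w = map Some (xs w)"
  by (induction w rule: xs.induct) auto

lemma nq1: "nq w = 1 \<Longrightarrow> \<exists>p s. w = map Some p @ None # map Some s"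
proof (induction w rule: xs.induct)
  case 1 then show ?case by simp
next
  case (2 w) then show ?case using nq0[of w] by (rule_tac x="[]" in exI) auto
next
  case (3 j w)
  then obtain p s where "w = map Some p @ None # map Some s" by auto
  then show ?case by (rule_tac x="j # p" in exI) auto
qed

lemma not_sorted_split: "\<not> sorted (u :: 'j::linorder list) \<Longrightarrow> \<exists>a x y b. u = a @ [x, y] @ b \<and> x > y"
proof (induction u)
  case Nil then show ?case by simp
next
  case (Cons c u)
  show ?case
  proof (cases "sorted u")
    case True
    then have "u \<noteq> []" and "c > hd u" using Cons.prems
      by (cases u; auto)+
    then show ?thesis by (rule_tac x="[]" in exI, rule_tac x=c in exI, rule_tac x="hd u" in exI,
      rule_tac x="tl u" in exI) auto
  next
    case False
    then obtain a x y b where "u = a @ [x, y] @ b \<and> x > y" using Cons.IH by blast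
    then show ?thesis by (rule_tac x="c # a" in exI) auto
  qed
qed


context pbwk
begin

abbreviation "NN \<equiv> ideal_U br k"

lemma NN_add: "f \<in> NN \<Longrightarrow> h \<in> NN \<Longrightarrow> f + h \<in> NN" unfolding ideal_U_def by (rule ideal_add)
lemma NN_diff: "f \<in> NN \<Longrightarrow> h \<in> NN \<Longrightarrow> f - h \<in> NN" unfolding ideal_U_def by (rule ideal_diff)
lemma NN_sm: "f \<in> NN \<Longrightarrow> sm c f \<in> NN" unfolding ideal_U_def by (rule ideal_sm)
lemma NN_0: "0 \<in> NN" unfolding ideal_U_def by (rule ideal_gen.zero)

definition inV :: "('j,'k) tens \<Rightarrow> bool" where
  "inV f \<longleftrightarrow> (\<exists>g. ks g \<subseteq> pbw_words \<and> f - g \<in> NN)"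

lemma inV_add: "inV f \<Longrightarrow> inV h \<Longrightarrow> inV (f + h)"
proof -
  assume "inV f" "inV h"
  then obtain g g' where "ks g \<subseteq> pbw_words" "f - g \<in> NN" "ks g' \<subseteq> pbw_words" "h - g' \<in> NN"
    unfolding inV_def by blast
  then show ?thesis unfolding inV_def
    by (rule_tac x="g + g'" in exI) (auto dest: subsetD[OF keys_add] NN_add[of "f - g" "h - g'"] simp: algebra_simps)
qed

lemma inV_sm: "inV f \<Longrightarrow> inV (sm c f)"
proof -
  assume "inV f"
  then obtain g where "ks g \<subseteq> pbw_words" "f - g \<in> NN" unfolding inV_def by blast
  then show ?thesis unfolding inV_def
    by (rule_tac x="sm c g" in exI) (auto dest: subsetD[OF keys_sm] NN_sm[of "f - g" c] simp: sm_diff)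
qed

lemma inV_N: "f \<in> NN \<Longrightarrow> inV f"
  unfolding inV_def by (rule_tac x=0 in exI) simp

lemma inV_0: "inV 0" by (rule inV_N[OF NN_0])

lemma inV_neg: "inV f \<Longrightarrow> inV (- f)"
  using inV_sm[of f "-1"] by (simp add: sm_minus_one)
lemma inV_diff: "inV f \<Longrightarrow> inV h \<Longrightarrow> inV (f - h)"
  using inV_add[of f "- h"] inV_neg[of h] by simp

lemma inV_smk: "inV (sm k f) \<Longrightarrow> inV f"
  using inV_sm[of "sm k f" "inverse k"] knz by simp

lemma inV_pbw: "w \<in> pbw_words \<Longrightarrow> inV (wd w)"
  unfolding inV_def by (rule_tac x="wd w" in exI) (simp add: wd_def NN_0)

lemma inV_sum: "(\<And>i. i \<in> A \<Longrightarrow> inV (f i)) \<Longrightarrow> inV (sum f A)"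
  by (induction A rule: infinite_finite_induct) (auto simp: inV_0 inV_add)

lemma inV_all: "(\<And>w. inV (wd w)) \<Longrightarrow> inV f"
proof -
  assume a: "\<And>w. inV (wd w)"
  have "f = lx wd f" by (rule wd_lx)
  also have "inV (lx wd f)" unfolding lx_def by (rule inV_sum) (rule inV_sm[OF a])
  finally show ?thesis .
qed

lemma low_eq: "wd a \<star> emb v \<star> wd b = lx (\<lambda>j. wd (a @ [Some j] @ b)) v"
proof -
  have "wd a \<star> emb v = lx (\<lambda>j. wd a \<star> wd [Some j]) v"
    unfolding emb_lx by (rule lin_comp_ext[OF lin_tmult_right])
  then have "wd a \<star> emb v \<star> wd b = lx (\<lambda>j. wd a \<star> wd [Some j] \<star> wd b) v"
    using lin_comp_ext[OF lin_tmult_left[of "wd b"], of "\<lambda>j. wd a \<star> wd [Some j]" v] by simp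
  then show ?thesis by simp
qed

lemma inV_low: "(\<And>j. inV (wd (a @ [Some j] @ b))) \<Longrightarrow> inV (wd a \<star> emb v \<star> wd b)"
  unfolding low_eq lx_def by (rule inV_sum) (rule inV_sm)

lemma relR: "wd P \<star> emb (Bk br i j) \<star> wd S - wd (P @ [Some i, Some j] @ S) + wd (P @ [Some j, Some i] @ S)
  + wd (P @ [Some i, Some j, None] @ S) - wd (P @ [Some j, Some i, None] @ S)
  - sm k (wd (P @ [Some i, None, Some j] @ S)) + sm k (wd (P @ [Some j, None, Some i] @ S)) \<in> NN"
proof -
  let ?g = "emb (br (z i) (z j)) - emb (z i) \<star> emb (z j) + emb (z j) \<star> emb (z i)
                  + emb (z i) \<star> emb (z j) \<star> qt - emb (z j) \<star> emb (z i) \<star> qt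
                  - tsmult k (emb (z i) \<star> qt \<star> emb (z j)) + tsmult k (emb (z j) \<star> qt \<star> emb (z i))"
  have "?g \<in> gens_R br k" unfolding gens_R_def by blast
  then have "wd P \<star> ?g \<star> wd S \<in> NN" unfolding ideal_U_def by (rule_tac ideal_gen.gen) blast
  moreover have ez: "emb (z l) = wd [Some l]" for l :: 'j
    by (simp add: emb_lx wd_def)
  ultimately show ?thesis
    by (simp add: ez Bk_def qt_def tsmult_sm tmult_add_left tmult_add_right tmult_diff_left tmult_diff_right
        tmult_sm_left tmult_sm_right tmult_assoc del: sm_single)
qed

lemma relQ: "None \<in> set P \<Longrightarrow> wd (P @ None # t) - wd (P @ t) \<in> NN"
proof -
  assume "None \<in> set P"
  then obtain P1 P2 where P: "P = P1 @ None # P2" by (meson split_list)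
  have "qt \<star> wd P2 \<star> qt - qt \<star> wd P2 \<in> gens_I" unfolding gens_I_def by blast
  then have "wd P1 \<star> (qt \<star> wd P2 \<star> qt - qt \<star> wd P2) \<star> wd t \<in> NN"
    unfolding ideal_U_def by (rule_tac ideal_gen.gen) blast
  then show ?thesis using P by (simp add: qt_def tmult_diff_left tmult_diff_right tmult_assoc)
qed

end


context pbwk
begin

lemma rule_b:
  assumes a1: "inV (wd (A @ [Some y, Some x] @ B))"
    and a2: "inV (wd (A @ [Some x, Some y, None] @ B))"
    and a3: "inV (wd (A @ [Some y, Some x, None] @ B))"
    and a4: "inV (wd (A @ [Some x, None, Some y] @ B))"
    and a5: "inV (wd (A @ [Some y, None, Some x] @ B))"
    and a6: "\<And>j. inV (wd (A @ [Some j] @ B))"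
  shows "inV (wd (A @ [Some x, Some y] @ B))"
proof -
  let ?low = "wd A \<star> emb (Bk br x y) \<star> wd B"
  let ?E = "?low - wd (A @ [Some x, Some y] @ B) + wd (A @ [Some y, Some x] @ B)
  + wd (A @ [Some x, Some y, None] @ B) - wd (A @ [Some y, Some x, None] @ B)
  - sm k (wd (A @ [Some x, None, Some y] @ B)) + sm k (wd (A @ [Some y, None, Some x] @ B))"
  have E: "?E \<in> NN" by (rule relR)
  have low: "inV ?low" by (rule inV_low) (rule a6)
  have eq: "wd (A @ [Some x, Some y] @ B) = ?low + wd (A @ [Some y, Some x] @ B)
     + wd (A @ [Some x, Some y, None] @ B) - wd (A @ [Some y, Some x, None] @ B)
     - sm k (wd (A @ [Some x, None, Some y] @ B)) + sm k (wd (A @ [Some y, None, Some x] @ B)) - ?E"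
    by (simp add: algebra_simps)
  show ?thesis apply (subst eq)
    apply (rule inV_diff[OF inV_add[OF inV_diff[OF inV_diff[OF inV_add[OF inV_add[OF low a1] a2] a3]
         inV_sm[OF a4]] inV_sm[OF a5]] inV_N[OF E]])
    done
qed

lemma rule_a:
  assumes nP: "None \<in> set P"
    and a1: "inV (wd (P @ [Some y, Some x] @ B))"
    and a6: "\<And>j. inV (wd (P @ [Some j] @ B))"
  shows "inV (wd (P @ [Some x, Some y] @ B))"
proof -
  let ?low = "wd P \<star> emb (Bk br x y) \<star> wd B"
  let ?X = "wd (P @ [Some x, Some y] @ B)" let ?Y = "wd (P @ [Some y, Some x] @ B)"
  let ?E = "?low - ?X + ?Y
  + wd (P @ [Some x, Some y, None] @ B) - wd (P @ [Some y, Some x, None] @ B)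
  - sm k (wd (P @ [Some x, None, Some y] @ B)) + sm k (wd (P @ [Some y, None, Some x] @ B))"
  have E: "?E \<in> NN" by (rule relR)
  let ?Q1 = "wd (P @ [Some x, Some y, None] @ B) - ?X"
  let ?Q2 = "wd (P @ [Some y, Some x, None] @ B) - ?Y"
  let ?Q3 = "wd (P @ [Some x, None, Some y] @ B) - ?X"
  let ?Q4 = "wd (P @ [Some y, None, Some x] @ B) - ?Y"
  have Q1: "?Q1 \<in> NN" using relQ[of "P @ [Some x, Some y]" B] nP by simp
  have Q2: "?Q2 \<in> NN" using relQ[of "P @ [Some y, Some x]" B] nP by simp
  have Q3: "?Q3 \<in> NN" using relQ[of "P @ [Some x]" "Some y # B"] nP by simp
  have Q4: "?Q4 \<in> NN" using relQ[of "P @ [Some y]" "Some x # B"] nP by simp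
  have low: "inV ?low" by (rule inV_low) (rule a6)
  have eq: "sm k ?X = ?low + ?Q1 - ?Q2 - sm k ?Q3 + sm k ?Y + sm k ?Q4 - ?E"
    by (simp add: algebra_simps sm_diff sm_add)
  have "inV (sm k ?X)" apply (subst eq)
    apply (rule inV_diff[OF inV_add[OF inV_add[OF inV_diff[OF inV_diff[OF inV_add[OF low inV_N[OF Q1]]
        inV_N[OF Q2]] inV_sm[OF inV_N[OF Q3]]] inV_sm[OF a1]] inV_sm[OF inV_N[OF Q4]]] inV_N[OF E]])
    done
  then show ?thesis by (rule inV_smk)
qed

lemma rule_d:
  assumes a1: "inV (wd (A @ [Some y, None, Some x] @ S))"
    and a6: "\<And>j. inV (wd (A @ [Some j] @ None # S))"
  shows "inV (wd (A @ [Some x, None, Some y] @ S))"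
proof -
  let ?low = "wd A \<star> emb (Bk br x y) \<star> wd (None # S)"
  let ?X = "wd (A @ [Some x, None, Some y] @ S)" let ?Y = "wd (A @ [Some y, None, Some x] @ S)"
  let ?M = "wd (A @ [Some x, Some y, None] @ S)" let ?M' = "wd (A @ [Some y, Some x, None] @ S)"
  let ?E = "?low - wd (A @ [Some x, Some y] @ None # S) + wd (A @ [Some y, Some x] @ None # S)
  + wd (A @ [Some x, Some y, None] @ None # S) - wd (A @ [Some y, Some x, None] @ None # S)
  - sm k (wd (A @ [Some x, None, Some y] @ None # S)) + sm k (wd (A @ [Some y, None, Some x] @ None # S))"
  have E: "?E \<in> NN" by (rule relR)
  let ?Q1 = "wd (A @ [Some x, Some y, None] @ None # S) - ?M"
  let ?Q2 = "wd (A @ [Some y, Some x, None] @ None # S) - ?M'"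
  let ?Q3 = "wd (A @ [Some x, None, Some y] @ None # S) - ?X"
  let ?Q4 = "wd (A @ [Some y, None, Some x] @ None # S) - ?Y"
  have Q1: "?Q1 \<in> NN" using relQ[of "A @ [Some x, Some y, None]" S] by simp
  have Q2: "?Q2 \<in> NN" using relQ[of "A @ [Some y, Some x, None]" S] by simp
  have Q3: "?Q3 \<in> NN" using relQ[of "A @ [Some x, None, Some y]" S] by simp
  have Q4: "?Q4 \<in> NN" using relQ[of "A @ [Some y, None, Some x]" S] by simp
  have low: "inV ?low" by (rule inV_low) (use a6 in simp)
  have eq: "sm k ?X = ?low + ?Q1 - ?Q2 - sm k ?Q3 + sm k ?Y + sm k ?Q4 - ?E"
    by (simp add: algebra_simps sm_diff sm_add)
  have "inV (sm k ?X)" apply (subst eq)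
    apply (rule inV_diff[OF inV_add[OF inV_add[OF inV_diff[OF inV_diff[OF inV_add[OF low inV_N[OF Q1]]
        inV_N[OF Q2]] inV_sm[OF inV_N[OF Q3]]] inV_sm[OF a1]] inV_sm[OF inV_N[OF Q4]]] inV_N[OF E]])
    done
  then show ?thesis by (rule inV_smk)
qed

lemma rule_e:
  assumes a1: "inV (wd (A @ [Some y, Some x] @ T1 @ None # T2))"
    and a2: "inV (wd (A @ [Some x, Some y, None] @ T1 @ T2))"
    and a3: "inV (wd (A @ [Some y, Some x, None] @ T1 @ T2))"
    and a4: "inV (wd (A @ [Some x, None, Some y] @ T1 @ T2))"
    and a5: "inV (wd (A @ [Some y, None, Some x] @ T1 @ T2))"
    and a6: "\<And>j. inV (wd (A @ [Some j] @ T1 @ None # T2))"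
  shows "inV (wd (A @ [Some x, Some y] @ T1 @ None # T2))"
proof -
  let ?S = "T1 @ None # T2"
  let ?low = "wd A \<star> emb (Bk br x y) \<star> wd ?S"
  let ?X = "wd (A @ [Some x, Some y] @ ?S)" let ?Y = "wd (A @ [Some y, Some x] @ ?S)"
  let ?E = "?low - ?X + ?Y
  + wd (A @ [Some x, Some y, None] @ ?S) - wd (A @ [Some y, Some x, None] @ ?S)
  - sm k (wd (A @ [Some x, None, Some y] @ ?S)) + sm k (wd (A @ [Some y, None, Some x] @ ?S))"
  have E: "?E \<in> NN" by (rule relR)
  let ?Q1 = "wd (A @ [Some x, Some y, None] @ ?S) - wd (A @ [Some x, Some y, None] @ T1 @ T2)"
  let ?Q2 = "wd (A @ [Some y, Some x, None] @ ?S) - wd (A @ [Some y, Some x, None] @ T1 @ T2)"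
  let ?Q3 = "wd (A @ [Some x, None, Some y] @ ?S) - wd (A @ [Some x, None, Some y] @ T1 @ T2)"
  let ?Q4 = "wd (A @ [Some y, None, Some x] @ ?S) - wd (A @ [Some y, None, Some x] @ T1 @ T2)"
  have Q1: "?Q1 \<in> NN" using relQ[of "A @ [Some x, Some y, None] @ T1" T2] by simp
  have Q2: "?Q2 \<in> NN" using relQ[of "A @ [Some y, Some x, None] @ T1" T2] by simp
  have Q3: "?Q3 \<in> NN" using relQ[of "A @ [Some x, None, Some y] @ T1" T2] by simp
  have Q4: "?Q4 \<in> NN" using relQ[of "A @ [Some y, None, Some x] @ T1" T2] by simp
  have low: "inV ?low" by (rule inV_low) (rule a6)
  have eq: "?X = ?low + ?Y + wd (A @ [Some x, Some y, None] @ T1 @ T2) + ?Q1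
     - wd (A @ [Some y, Some x, None] @ T1 @ T2) - ?Q2
     - sm k (wd (A @ [Some x, None, Some y] @ T1 @ T2)) - sm k ?Q3
     + sm k (wd (A @ [Some y, None, Some x] @ T1 @ T2)) + sm k ?Q4 - ?E"
    by (simp add: algebra_simps sm_diff sm_add)
  show ?thesis apply (subst eq)
    apply (rule inV_diff[OF inV_add[OF inV_add[OF inV_diff[OF inV_diff[OF inV_diff[OF inV_diff[OF inV_add[OF inV_add[OF inV_add[OF low a1] a2] inV_N[OF Q1]] a3] inV_N[OF Q2]] inV_sm[OF a4]] inV_sm[OF inV_N[OF Q3]]] inV_sm[OF a5]] inV_sm[OF inV_N[OF Q4]]] inV_N[OF E]])
    done
qed

end


definition meas :: "'j::linorder option list \<Rightarrow> nat \<times> nat \<times> nat \<times> nat \<times> nat" where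
  "meas w = (length (xs w), if nq w = 0 then 1 else 0, nq w, qp w, inv (xs w))"

definition RW :: "('j::linorder option list \<times> 'j option list) set" where
  "RW = inv_image (less_than <*lex*> less_than <*lex*> less_than <*lex*> less_than <*lex*> less_than) meas"

lemma wfRW: "wf RW"
  unfolding RW_def by (intro wf_inv_image wf_lex_prod wf_less_than)

lemma RW_I1: "length (xs w') < length (xs w) \<Longrightarrow> (w', w) \<in> RW"
  by (simp add: RW_def meas_def)
lemma RW_I2: "length (xs w') = length (xs w) \<Longrightarrow> nq w' > 0 \<Longrightarrow> nq w = 0 \<Longrightarrow> (w', w) \<in> RW"
  by (simp add: RW_def meas_def)
lemma RW_I3: "length (xs w') = length (xs w) \<Longrightarrow> nq w' > 0 \<Longrightarrow> nq w' < nq w \<Longrightarrow> (w', w) \<in> RW"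
  by (simp add: RW_def meas_def)
lemma RW_I4: "length (xs w') = length (xs w) \<Longrightarrow> nq w' = nq w \<Longrightarrow> qp w' < qp w \<Longrightarrow> (w', w) \<in> RW"
  by (simp add: RW_def meas_def)
lemma RW_I5: "length (xs w') = length (xs w) \<Longrightarrow> nq w' = nq w \<Longrightarrow> qp w' = qp w \<Longrightarrow> inv (xs w') < inv (xs w) \<Longrightarrow> (w', w) \<in> RW"
  by (simp add: RW_def meas_def)

lemma inv_swap': "x > y \<Longrightarrow> inv (a @ x # y # b) = Suc (inv (a @ y # x # b))"
  using inv_swap[of y x a b] by simp

lemma nq_pos: "None \<in> set P \<Longrightarrow> nq P > 0"
  by (induction P rule: nq.induct) auto

context pbwk
begin

lemma inV_cong: "f - h \<in> NN \<Longrightarrow> inV h \<Longrightarrow> inV f"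
  using inV_add[OF inV_N] by fastforce

lemma span_wd: "inV (wd w)"
proof (induction w rule: wf_induct[OF wfRW])
  case (1 w)
  then have IH: "\<And>w'. (w', w) \<in> RW \<Longrightarrow> inV (wd w')" by blast
  show ?case
  proof (cases "w \<in> pbw_words")
    case True then show ?thesis by (rule inV_pbw)
  next
    case npbw: False
    consider (q2) "nq w \<ge> 2" | (q0) "nq w = 0" | (q1) "nq w = 1" by linarith
    then show ?thesis
    proof cases
      case q2
      obtain P t where w: "w = P @ None # t" and nP: "None \<in> set P" using nq_pos_split[OF q2] by blast
      have "inV (wd (P @ t))"
        by (rule IH, rule RW_I3) (use w nq_pos[OF nP] in auto)
      then show ?thesis using relQ[OF nP, of t] w inV_cong by blast
    next
      case q0
      let ?u = "xs w"
      have w: "w = map Some ?u" by (rule nq0[OF q0])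
      have ns: "\<not> sorted ?u" using npbw w unfolding pbw_words_def by blast
      obtain a x y b where u: "?u = a @ [x, y] @ b" and xy: "x > y" using not_sorted_split[OF ns] by blast
      have w': "w = map Some a @ [Some x, Some y] @ map Some b" using w u by simp
      show ?thesis unfolding w'
      proof (rule rule_b)
        show "inV (wd (map Some a @ [Some y, Some x] @ map Some b))"
          by (rule IH, rule RW_I5) (use w' inv_swap'[OF xy, of a b] in auto)
        show "inV (wd (map Some a @ [Some x, Some y, None] @ map Some b))"
          by (rule IH, rule RW_I2) (use w' in auto)
        show "inV (wd (map Some a @ [Some y, Some x, None] @ map Some b))"
          by (rule IH, rule RW_I2) (use w' in auto)
        show "inV (wd (map Some a @ [Some x, None, Some y] @ map Some b))"
          by (rule IH, rule RW_I2) (use w' in auto)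
        show "inV (wd (map Some a @ [Some y, None, Some x] @ map Some b))"
          by (rule IH, rule RW_I2) (use w' in auto)
        show "inV (wd (map Some a @ [Some j] @ map Some b))" for j
          by (rule IH, rule RW_I1) (use w' in auto)
      qed
    next
      case q1
      obtain p s where w: "w = map Some p @ None # map Some s" using nq1[OF q1] by blast
      show ?thesis
      proof (cases "sorted s")
        case False
        obtain a x y b where s: "s = a @ [x, y] @ b" and xy: "x > y" using not_sorted_split[OF False] by blast
        let ?P = "map Some p @ None # map Some a"
        have w': "w = ?P @ [Some x, Some y] @ map Some b" using w s by simp
        show ?thesis unfolding w'
        proof (rule rule_a)
          show "None \<in> set ?P" by simp
          show "inV (wd (?P @ [Some y, Some x] @ map Some b))"
            by (rule IH, rule RW_I5) (use w' inv_swap'[OF xy, of "p @ a" b] in auto)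
          show "inV (wd (?P @ [Some j] @ map Some b))" for j
            by (rule IH, rule RW_I1) (use w' in auto)
        qed
      next
        case ss: True
        show ?thesis
        proof (cases "p = []")
          case True
          then have "w \<in> pbw_words" using w ss unfolding pbw_words_def by auto
          then show ?thesis using npbw by simp
        next
          case False
          obtain p0 zl where p: "p = p0 @ [zl]" using False by (cases p rule: rev_cases) auto
          show ?thesis
          proof (cases "sorted p0")
            case False
            obtain a x y b where p0: "p0 = a @ [x, y] @ b" and xy: "x > y"
              using not_sorted_split[OF False] by blast
            let ?A = "map Some a" let ?T1 = "map Some (b @ [zl])" let ?T2 = "map Some s"
            have w': "w = ?A @ [Some x, Some y] @ ?T1 @ None # ?T2" using w p p0 by simp
            show ?thesis unfolding w'
            proof (rule rule_e)
              show "inV (wd (?A @ [Some y, Some x] @ ?T1 @ None # ?T2))"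
                by (rule IH, rule RW_I5) (use w' inv_swap'[OF xy, of a "b @ zl # s"] in auto)
              show "inV (wd (?A @ [Some x, Some y, None] @ ?T1 @ ?T2))"
                by (rule IH, rule RW_I4) (use w' in auto)
              show "inV (wd (?A @ [Some y, Some x, None] @ ?T1 @ ?T2))"
                by (rule IH, rule RW_I4) (use w' in auto)
              show "inV (wd (?A @ [Some x, None, Some y] @ ?T1 @ ?T2))"
                by (rule IH, rule RW_I4) (use w' in auto)
              show "inV (wd (?A @ [Some y, None, Some x] @ ?T1 @ ?T2))"
                by (rule IH, rule RW_I4) (use w' in auto)
              show "inV (wd (?A @ [Some j] @ ?T1 @ None # ?T2))" for j
                by (rule IH, rule RW_I1) (use w' in auto)
            qed
          next
            case sp0: True
            show ?thesis
            proof (cases "s \<noteq> [] \<and> zl > hd s")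
              case True
              obtain y s' where s: "s = y # s'" using True by (cases s) auto
              have yz: "zl > y" using True s by simp
              have w': "w = map Some p0 @ [Some zl, None, Some y] @ map Some s'" using w p s by simp
              show ?thesis unfolding w'
              proof (rule rule_d)
                show "inV (wd (map Some p0 @ [Some y, None, Some zl] @ map Some s'))"
                  by (rule IH, rule RW_I5) (use w' inv_swap'[OF yz, of p0 s'] in auto)
                show "inV (wd (map Some p0 @ [Some j] @ None # map Some s'))" for j
                  by (rule IH, rule RW_I1) (use w' in auto)
              qed
            next
              case False
              then have szs: "sorted (zl # s)" using ss by (cases s) auto
              have "w = map Some p0 @ [Some zl, None] @ map Some s" using w p by simp
              then have "w \<in> pbw_words" using sp0 szs unfolding pbw_words_def by blast
              then show ?thesis using npbw by simp
            qed
          qed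
        qed
      qed
    qed
  qed
qed

theorem spanning: "\<exists>g. ks g \<subseteq> pbw_words \<and> f - g \<in> NN"
  using inV_all[OF span_wd] unfolding inV_def by blast

end


context pbwk
begin

lemma lookup_sum_wd: "finite S \<Longrightarrow> w \<in> S \<Longrightarrow> lk (\<Sum>w'\<in>S. sm (c w') (wd w')) w = c w"
proof -
  assume fS: "finite S" and wS: "w \<in> S"
  have "lk (\<Sum>w'\<in>S. sm (c w') (wd w')) w = (\<Sum>w'\<in>S. c w' * lk (wd w') w)"
    by (simp add: lookup_sum)
  also have "\<dots> = c w * lk (wd w) w"
    by (rule sum_single_out[OF fS wS]) (simp add: wd_def lookup_single)
  also have "\<dots> = c w" by (simp add: wd_def)
  finally show ?thesis .
qed

theorem main: "cosets_basis NN (pbw_words :: 'j option list set)"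
  unfolding cosets_basis_def tsmult_sm
proof (intro conjI allI impI)
  fix f :: "('j,'k) tens"
  obtain g where g: "ks g \<subseteq> pbw_words" "f - g \<in> NN" using spanning by blast
  have "(\<Sum>w\<in>ks g. sm (lk g w) (wd w)) = g"
    using wd_lx[of g] by (simp add: lx_def)
  then show "\<exists>S c. finite S \<and> S \<subseteq> pbw_words \<and> f - (\<Sum>w\<in>S. sm (c w) (wd w)) \<in> NN"
    using g by (rule_tac x="ks g" in exI, rule_tac x="lk g" in exI) simp
next
  fix S c
  assume a: "finite S \<and> S \<subseteq> pbw_words \<and> (\<Sum>w\<in>S. sm (c w) (wd w)) \<in> NN"
  let ?h = "\<Sum>w\<in>S. sm (c w) (wd w)"
  have "ks ?h \<subseteq> S"
    by (rule keys_sum_sub) (auto simp: wd_def dest: subsetD[OF keys_sm])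
  then have "?h = 0" using a indep by blast
  then show "\<forall>w\<in>S. c w = 0" using lookup_sum_wd[of S _ c] a by (metis lookup_zero)
qed

end

theorem proposition3p2:
  fixes br :: "('j::linorder,'k::field) lie \<Rightarrow> ('j,'k) lie \<Rightarrow> ('j,'k) lie"
    and k :: 'k
  assumes "is_lie_bracket br"
    and "k \<noteq> 0"
  shows "cosets_basis (ideal_U br k) (pbw_words :: 'j option list set)"
proof -
  interpret pbwk br k by unfold_locales (fact assms)+
  show ?thesis by (rule main)
qed


end
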